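(* Consider adversarial training and let $T_0=\min\{t\ge0:\max_{r\in[m]}w^{(t)}_{r,1}>C_0/(\alpha m^{1/3})\}$. On the event $\mathcal E$, fix $t\in[T_0+1,T]$ and suppose the noise-stability bound $|\langle\mathbf w^{(\tau)}_r,\mathbf x_{i,j}\rangle|\le3\sigma_0\sigma_n\sqrt{d\log(16NmP/\delta)}+\dfrac{21p_{\mathrm{un}}NP\log^{1/3}T}{\sqrt d}\sqrt{\log(16N^2P^2/\delta)}$ holds for all $r\in[m]$, $i\in\mathcal S_L$, $j\ne s(\mathbf X_i)$ and all $\tau\le t$. Then for every learnable sample $i\in\mathcal S_L$, $\sum_{\tau=T_0}^{t-1}\psi(y_if_{\mathbf W^{(\tau)}}(\tilde{\mathbf X}^{(\tau)}_i))\le\dfrac{2m^{2/3}\log^{1/3}T}{C_0^2(1-\epsilon/\alpha)^3\eta\alpha^2}$ and $\psi(y_if_{\mathbf W^{(t)}}(\tilde{\mathbf X}^{(t)}_i))\le\dfrac{4m^{2/3}\log^{1/3}T}{C_0^2(1-\epsilon/\alpha)^3\eta\alpha^2(t-T_0)}$.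
   Context: Data. Fix integers $N,P,d,m$ and reals $\alpha,\sigma_n,\sigma_0,\eta,\epsilon,\Gamma>0$, $\delta\in(0,1)$, and a horizon $T\in\mathbb N$. Let $\mathbf u=\mathbf e_1$, $\mathbf v=\mathbf e_d$ and $\Pi_{\mathcal F}$ the orthogonal projection onto $\mathrm{span}\{\mathbf u,\mathbf v\}$. Fix a partition $[N]=\mathcal S_L\sqcup\mathcal S_U$, $p_{\mathrm{un}}=|\mathcal S_U|/N$. Independently for each $i$: $y_i$ uniform on $\{\pm1\}$, $s(\mathbf X_i)$ uniform on $[P]$, $\mathbf x_{i,s(\mathbf X_i)}=\alpha y_i\mathbf u$ if $i\in\mathcal S_L$ and $\alpha y_i\mathbf v$ if $i\in\mathcal S_U$, noise patches $\mathbf x_{i,p}\sim\mathcal N(\mathbf 0,\sigma_n^2(\mathbf I_d-\Pi_{\mathcal F}))$ for $p\ne s(\mathbf X_i)$, independent. Student $f_{\mathbf W}(\mathbf X)=\sum_{r=1}^m\sum_{p=1}^P[\phi(\langle\mathbf w_r,\mathbf x_p\rangle)-\phi(-\langle\mathbf w_r,\mathbf x_p\rangle)]$, $\phi(z)=(\max\{0,z\})^3$; $w^{(0)}_{r,j}\sim\mathcal N(0,\sigma_0^2)$ i.i.d. for $j<d$, $w^{(0)}_{r,d}=0$, $w_{r,d}=0$ maintained; $w_{r,1}=\langle\mathbf w_r,\mathbf e_1\rangle$. $\ell(z)=\log(1+e^{-z})$, $\psi(z)=(1+e^{z})^{-1}$. $\tilde{\mathbf X}^{(t)}_i$ maximizes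 $\ell(y_if_{\mathbf W^{(t)}}(\mathbf X'))$ over $\|\mathbf X'-\mathbf X_i\|_\infty\le\epsilon$, $\mathbf X'-\mathbf X_i\in\mathrm{span}(\mathbf x_{i,s(\mathbf X_i)})$. Adversarial training: $\mathbf W^{(t+1)}=\mathbf W^{(t)}-\frac\eta N\sum_i\nabla_{\mathbf W}\ell(y_if_{\mathbf W}(\tilde{\mathbf X}^{(t)}_i))|_{\mathbf W^{(t)}}$ with $\tilde{\mathbf X}^{(t)}_i$ fixed. $C_0>0$ is a fixed, sufficiently large absolute constant. Standing parameter conditions (for a sufficiently large universal constant $C>0$): (i) $T\ge CN/(\eta\sigma_0\sigma_n^3d^{3/2})$; (ii) $d\ge Cm^2P^2N^2\log^4(TNmP/\delta)$; (iii) $\alpha\ge C\sigma_n\sqrt d\log(TNmP/\delta)/(N^{1/3}(1-p_{\mathrm{un}})^{1/3})$; (iv) $\sigma_0\le C^{-1}\min\{\frac{1}{m^{2/3}P^{2/3}\sigma_n\sqrt d},\frac{1}{\alpha m^{2/3}},\frac{1}{\sigma_nm^2P^{1/2}d}\}/\log(TdNmP/\delta)$; (v) $\eta\le C^{-1}\min\{\frac1{\alpha^3\sigma_0},\frac1{\sigma_n^2d},\frac1{\alpha^2}\}/\log(TNmP/\delta)$; (vi) $C\sigma_nmP^{1/2}\log(TdNP/\delta)\le\epsilon<C^{-1}\min\{\alpha,\frac1{m\sigma_0d}\}$; (vii) either $p_{\mathrm{un}}=0$, or $C/N\le p_{\mathrm{un}}\le C^{-1}\log d/N$, and $N\ge CmP\log(TdNmP/\delta)$;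 (viii) $C\log(NP/\delta)\le m\le C\log^Cd$, $2\le P\le C$; (ix) $\Gamma\ge Cd$. Event $\mathcal E$: for all $r\in[m]$, $i,k\in[N]$, $j\ne s(\mathbf X_i)$, $q\ne s(\mathbf X_k)$, $(i,j)\ne(k,q)$: $\frac12\sigma_n^2d\le\|\mathbf x_{i,j}\|_2^2\le\frac32\sigma_n^2d$; $|\langle\mathbf x_{i,j},\mathbf x_{k,q}\rangle|\le2\sigma_n^2\sqrt{d\log(16N^2P^2/\delta)}$; $\|\mathbf x_{i,j}\|_\infty\le\sigma_n\sqrt{2\log(16dNP/\delta)}$; $\|\mathbf w_r^{(0)}\|_2\le2\sigma_0\sqrt d$; $|\langle\mathbf w^{(0)}_r,\mathbf e_1\rangle|\le\sigma_0\sqrt{2\log(16m/\delta)}$; $|\langle\mathbf w^{(0)}_r,\mathbf x_{i,j}\rangle|\le2\sigma_0\sigma_n\sqrt{d\log(16NmP/\delta)}$; $\frac12\sigma_0\le\max_r\langle\mathbf w^{(0)}_r,\mathbf e_1\rangle\le\sigma_0\sqrt{2\log(16m/\delta)}$; $\frac14\sigma_0\sigma_n\sqrt d\le\max_ry_i\langle\mathbf w^{(0)}_r,\mathbf x_{i,j}\rangle\le2\sigma_0\sigma_n\sqrt{d\log(16NmP/\delta)}$. *)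

theory Defs
  imports "HOL-Analysis.Analysis"
begin

text \<open>Vectors in R^d are functions nat => real, coordinates indexed by 1..d.
  A datum X is a function (patch index p in 1..P) => vector.
  Weights W are functions (neuron r in 1..m) => vector.\<close>

definition inner_d :: "nat \<Rightarrow> (nat \<Rightarrow> real) \<Rightarrow> (nat \<Rightarrow> real) \<Rightarrow> real" where
  "inner_d d a b = (\<Sum>j=1..d. a j * b j)"

definition unit_vec :: "nat \<Rightarrow> nat \<Rightarrow> real" where
  "unit_vec k = (\<lambda>j. if j = k then 1 else 0)"

definition sqnorm_d :: "nat \<Rightarrow> (nat \<Rightarrow> real) \<Rightarrow> real" where
  "sqnorm_d d a = (\<Sum>j=1..d. (a j)^2)"

definition supnorm_d :: "nat \<Rightarrow> (nat \<Rightarrow> real) \<Rightarrow> real" where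
  "supnorm_d d a = Max ((\<lambda>j. \<bar>a j\<bar>) ` {1..d})"

definition phi :: "real \<Rightarrow> real" where
  "phi z = (max 0 z) ^ 3"

definition fnet :: "nat \<Rightarrow> nat \<Rightarrow> nat \<Rightarrow> (nat \<Rightarrow> nat \<Rightarrow> real) \<Rightarrow> (nat \<Rightarrow> nat \<Rightarrow> real) \<Rightarrow> real" where
  "fnet m P d W X = (\<Sum>r=1..m. \<Sum>p=1..P. phi (inner_d d (W r) (X p)) - phi (- inner_d d (W r) (X p)))"

definition logloss :: "real \<Rightarrow> real" where
  "logloss z = ln (1 + exp (- z))"

definition psi :: "real \<Rightarrow> real" where
  "psi z = 1 / (1 + exp z)"

definition adm_set :: "nat \<Rightarrow> real \<Rightarrow> nat \<Rightarrow> (nat \<Rightarrow> nat \<Rightarrow> real) \<Rightarrow> (nat \<Rightarrow> nat \<Rightarrow> real) set" where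
  "adm_set d eps s X = {X'. \<exists>c::real.
      (\<forall>p. X' p = (if p = s then (\<lambda>j. X p j + c * X p j) else X p))
      \<and> (\<forall>j\<in>{1..d}. \<bar>c * X s j\<bar> \<le> eps)}"

definition grad_entry :: "nat \<Rightarrow> nat \<Rightarrow> nat \<Rightarrow> (nat \<Rightarrow> nat \<Rightarrow> real) \<Rightarrow> real \<Rightarrow> (nat \<Rightarrow> nat \<Rightarrow> real) \<Rightarrow> nat \<Rightarrow> nat \<Rightarrow> real" where
  "grad_entry m P d W yv X r j =
     deriv (\<lambda>h. logloss (yv * fnet m P d (W(r := (W r)(j := W r j + h))) X)) 0"

definition event_E :: "nat \<Rightarrow> nat \<Rightarrow> nat \<Rightarrow> nat \<Rightarrow> real \<Rightarrow> real \<Rightarrow> real \<Rightarrow>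
    (nat \<Rightarrow> real) \<Rightarrow> (nat \<Rightarrow> nat) \<Rightarrow> (nat \<Rightarrow> nat \<Rightarrow> nat \<Rightarrow> real) \<Rightarrow> (nat \<Rightarrow> nat \<Rightarrow> real) \<Rightarrow> bool" where
  "event_E N P d m sn s0 \<delta> y s x w0 \<longleftrightarrow>
    (\<forall>i\<in>{1..N}. \<forall>j\<in>{1..P}. j \<noteq> s i \<longrightarrow>
        sn^2 * d / 2 \<le> sqnorm_d d (x i j) \<and> sqnorm_d d (x i j) \<le> 3/2 * sn^2 * d
      \<and> supnorm_d d (x i j) \<le> sn * sqrt (2 * ln (16 * d * N * P / \<delta>))) \<and>
    (\<forall>i\<in>{1..N}. \<forall>j\<in>{1..P}. \<forall>k\<in>{1..N}. \<forall>q\<in>{1..P}.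
        j \<noteq> s i \<longrightarrow> q \<noteq> s k \<longrightarrow> (i, j) \<noteq> (k, q) \<longrightarrow>
        \<bar>inner_d d (x i j) (x k q)\<bar> \<le> 2 * sn^2 * sqrt (d * ln (16 * N^2 * P^2 / \<delta>))) \<and>
    (\<forall>r\<in>{1..m}. sqrt (sqnorm_d d (w0 r)) \<le> 2 * s0 * sqrt d
      \<and> \<bar>inner_d d (w0 r) (unit_vec 1)\<bar> \<le> s0 * sqrt (2 * ln (16 * m / \<delta>))) \<and>
    (\<forall>r\<in>{1..m}. \<forall>i\<in>{1..N}. \<forall>j\<in>{1..P}. j \<noteq> s i \<longrightarrow>
        \<bar>inner_d d (w0 r) (x i j)\<bar> \<le> 2 * s0 * sn * sqrt (d * ln (16 * N * m * P / \<delta>))) \<and>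
    s0 / 2 \<le> Max ((\<lambda>r. inner_d d (w0 r) (unit_vec 1)) ` {1..m}) \<and>
    Max ((\<lambda>r. inner_d d (w0 r) (unit_vec 1)) ` {1..m}) \<le> s0 * sqrt (2 * ln (16 * m / \<delta>)) \<and>
    (\<forall>i\<in>{1..N}. \<forall>j\<in>{1..P}. j \<noteq> s i \<longrightarrow>
        s0 * sn * sqrt d / 4 \<le> Max ((\<lambda>r. y i * inner_d d (w0 r) (x i j)) ` {1..m})
      \<and> Max ((\<lambda>r. y i * inner_d d (w0 r) (x i j)) ` {1..m}) \<le> 2 * s0 * sn * sqrt (d * ln (16 * N * m * P / \<delta>)))"

definition std_conditions :: "real \<Rightarrow> nat \<Rightarrow> nat \<Rightarrow> nat \<Rightarrow> nat \<Rightarrow> real \<Rightarrow> real \<Rightarrow> real \<Rightarrow> real \<Rightarrow> real \<Rightarrow> real \<Rightarrow> real \<Rightarrow> nat \<Rightarrow> real \<Rightarrow> bool" where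
  "std_conditions C N P d m \<alpha> sn s0 \<eta> \<epsilon> \<Gamma> \<delta> T pun \<longleftrightarrow>
    real T \<ge> C * N / (\<eta> * s0 * sn^3 * d powr (3/2)) \<and>
    real d \<ge> C * m^2 * P^2 * N^2 * (ln (T * N * m * P / \<delta>))^4 \<and>
    \<alpha> \<ge> C * sn * sqrt d * ln (T * N * m * P / \<delta>) / (N powr (1/3) * (1 - pun) powr (1/3)) \<and>
    s0 \<le> (1/C) * min (1 / (m powr (2/3) * P powr (2/3) * sn * sqrt d))
                 (min (1 / (\<alpha> * m powr (2/3))) (1 / (sn * m^2 * sqrt P * d)))
          / ln (T * d * N * m * P / \<delta>) \<and>
    \<eta> \<le> (1/C) * min (1 / (\<alpha>^3 * s0)) (min (1 / (sn^2 * d)) (1 / \<alpha>^2)) / ln (T * N * m * P / \<delta>) \<and>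
    C * sn * m * sqrt P * ln (T * d * N * P / \<delta>) \<le> \<epsilon> \<and>
    \<epsilon> < (1/C) * min \<alpha> (1 / (m * s0 * d)) \<and>
    (pun = 0 \<or> (C / N \<le> pun \<and> pun \<le> (1/C) * ln d / N)) \<and>
    real N \<ge> C * m * P * ln (T * d * N * m * P / \<delta>) \<and>
    C * ln (N * P / \<delta>) \<le> m \<and> real m \<le> C * (ln d) powr C \<and>
    2 \<le> P \<and> real P \<le> C \<and>
    \<Gamma> \<ge> C * d"

end

theory Submission
  imports Defs
begin

lemma phi_diff: "phi z - phi (- z) = z ^ 3"
  unfolding phi_def by (cases "z \<ge> 0") (auto simp: max_def power3_eq_cube)

lemma fnet_cube: "fnet m P d W X = (\<Sum>r=1..m. \<Sum>p=1..P. (inner_d d (W r) (X p)) ^ 3)"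
  unfolding fnet_def by (simp add: phi_diff)

lemma inner_upd:
  assumes "1 \<le> d"
  shows "inner_d d ((W r)(1 := W r 1 + h)) Y = inner_d d (W r) Y + h * Y 1"
proof -
  have "inner_d d ((W r)(1 := W r 1 + h)) Y = (\<Sum>j=1..d. W r j * Y j + (if j = 1 then h * Y 1 else 0))"
    unfolding inner_d_def by (rule sum.cong) (auto simp: algebra_simps)
  also have "\<dots> = inner_d d (W r) Y + h * Y 1"
    using assms by (simp add: sum.distrib inner_d_def)
  finally show ?thesis .
qed

lemma inner_upd':
  assumes "1 \<le> d"
  shows "inner_d d ((W r)(Suc 0 := W r (Suc 0) + h)) Y = inner_d d (W r) Y + h * Y (Suc 0)"
  using inner_upd[OF assms] by simp

lemma logloss_deriv: "(logloss has_real_derivative (- psi z)) (at z)"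
proof -
  have "((\<lambda>z. ln (1 + exp (- z))) has_real_derivative (1 / (1 + exp (- z))) * (exp (- z) * (- 1))) (at z)"
    by (auto intro!: derivative_eq_intros simp: add_pos_pos)
  moreover have "(1 / (1 + exp (- z))) * (exp (- z) * (- 1)) = - psi z"
    unfolding psi_def by (simp add: field_simps exp_minus)
  ultimately show ?thesis unfolding logloss_def by simp
qed

lemma grad1:
  assumes "1 \<le> d" "r \<in> {1..m}"
  shows "grad_entry m P d W yv X r 1 =
    - psi (yv * fnet m P d W X) * yv * (\<Sum>p=1..P. 3 * (inner_d d (W r) (X p))^2 * X p 1)"
proof -
  define a where "a r' p = inner_d d (W r') (X p)" for r' p
  define g where "g h = (\<Sum>r'=1..m. \<Sum>p=1..P. (a r' p + (if r' = r then h * X p 1 else 0)) ^ 3)" for h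
  have geq: "fnet m P d (W(r := (W r)(1 := W r 1 + h))) X = g h" for h
    unfolding fnet_cube g_def a_def
    by (rule sum.cong[OF refl], rule sum.cong[OF refl]) (auto simp: inner_upd[OF assms(1)] inner_upd'[OF assms(1)])
  have gd: "(g has_real_derivative (\<Sum>r'=1..m. \<Sum>p=1..P. 3 * (a r' p + (if r' = r then 0 * X p 1 else 0))^2 * (if r' = r then X p 1 else 0))) (at 0)"
    unfolding g_def
    by (intro DERIV_sum) (auto intro!: derivative_eq_intros simp: power2_eq_square)
  have "(\<Sum>r'=1..m. \<Sum>p=1..P. 3 * (a r' p + (if r' = r then 0 * X p 1 else 0))^2 * (if r' = r then X p 1 else 0))
      = (\<Sum>r'=1..m. if r' = r then (\<Sum>p=1..P. 3 * (a r p)^2 * X p 1) else 0)"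
    by (rule sum.cong) auto
  also have "\<dots> = (\<Sum>p=1..P. 3 * (a r p)^2 * X p 1)" using assms(2) by simp
  finally have gd2: "(g has_real_derivative (\<Sum>p=1..P. 3 * (a r p)^2 * X p 1)) (at 0)" using gd by simp
  have g0: "g 0 = fnet m P d W X" using geq[of 0] by simp
  have "((\<lambda>h. logloss (yv * g h)) has_real_derivative (- psi (yv * g 0)) * (yv * (\<Sum>p=1..P. 3 * (a r p)^2 * X p 1))) (at 0)"
    by (rule DERIV_chain2[OF logloss_deriv]) (auto intro!: derivative_eq_intros gd2)
  hence "deriv (\<lambda>h. logloss (yv * g h)) 0 = (- psi (yv * g 0)) * (yv * (\<Sum>p=1..P. 3 * (a r p)^2 * X p 1))"
    by (rule DERIV_imp_deriv)
  thus ?thesis unfolding grad_entry_def geq g0 a_def by simp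
qed

lemma inner_sig: "1 \<le> d \<Longrightarrow> inner_d d w (\<lambda>j. a * unit_vec k j) = (if k \<in> {1..d} then a * w k else 0)"
  unfolding inner_d_def unit_vec_def by (auto simp: if_distrib cong: if_cong)

lemma inner_scale: "inner_d d w (\<lambda>j. z j + c * z j) = (1 + c) * inner_d d w z"
  unfolding inner_d_def by (simp add: sum_distrib_left algebra_simps)

lemma y4: "y \<in> {-1, 1::real} \<Longrightarrow> y ^ 4 = 1" by auto
lemma y2: "y \<in> {-1, 1::real} \<Longrightarrow> y ^ 2 = 1" by auto

lemma margin_form:
  assumes y: "y \<in> {-1, 1}" and s: "s \<in> {1..P}" and d: "1 \<le> d"
    and xs: "x s = (\<lambda>j. \<alpha> * y * unit_vec 1 j)"
    and X: "\<forall>p. X p = (if p = s then (\<lambda>j. x p j + c * x p j) else x p)"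
  shows "y * fnet m P d W X = (1 + c)^3 * \<alpha>^3 * (\<Sum>r=1..m. (W r 1)^3)
           + y * (\<Sum>r=1..m. \<Sum>p\<in>{1..P}-{s}. (inner_d d (W r) (x p))^3)"
proof -
  have sig: "inner_d d (W r) (X s) = (1 + c) * (\<alpha> * y * W r 1)" for r
    using X d by (simp add: inner_scale xs inner_sig)
  have rest: "(\<Sum>p\<in>{1..P}-{s}. (inner_d d (W r) (X p))^3) = (\<Sum>p\<in>{1..P}-{s}. (inner_d d (W r) (x p))^3)" for r
    using X by (intro sum.cong) auto
  have split: "(\<Sum>p=1..P. (inner_d d (W r) (X p))^3) = ((1 + c) * (\<alpha> * y * W r 1))^3 + (\<Sum>p\<in>{1..P}-{s}. (inner_d d (W r) (x p))^3)" for r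
    using sum.remove[of "{1..P}" s "\<lambda>p. (inner_d d (W r) (X p))^3"] s sig rest by simp
  have "y * fnet m P d W X = (\<Sum>r=1..m. y * ((1 + c) * (\<alpha> * y * W r 1))^3 + y * (\<Sum>p\<in>{1..P}-{s}. (inner_d d (W r) (x p))^3))"
    unfolding fnet_cube split by (simp add: sum_distrib_left algebra_simps)
  also have "\<dots> = (\<Sum>r=1..m. (1 + c)^3 * \<alpha>^3 * (W r 1)^3 + y * (\<Sum>p\<in>{1..P}-{s}. (inner_d d (W r) (x p))^3))"
  proof (rule sum.cong[OF refl])
    fix r
    have "y * ((1 + c) * (\<alpha> * y * W r 1))^3 = (1 + c)^3 * \<alpha>^3 * (W r 1)^3 * y^4"
      by (simp add: power_mult_distrib algebra_simps eval_nat_numeral)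
    thus "y * ((1 + c) * (\<alpha> * y * W r 1))^3 + y * (\<Sum>p\<in>{1..P}-{s}. (inner_d d (W r) (x p))^3)
        = (1 + c)^3 * \<alpha>^3 * (W r 1)^3 + y * (\<Sum>p\<in>{1..P}-{s}. (inner_d d (W r) (x p))^3)"
      using y4[OF y] by simp
  qed
  also have "\<dots> = (1 + c)^3 * \<alpha>^3 * (\<Sum>r=1..m. (W r 1)^3)
           + y * (\<Sum>r=1..m. \<Sum>p\<in>{1..P}-{s}. (inner_d d (W r) (x p))^3)"
    by (simp add: sum.distrib sum_distrib_left)
  finally show ?thesis .
qed

lemma grad_form:
  assumes y: "y \<in> {-1, 1}" and s: "s \<in> {1..P}" and d: "1 \<le> d" and r: "r \<in> {1..m}"
    and xs: "x s = (\<lambda>j. \<alpha> * y * unit_vec 1 j)"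
    and xn: "\<forall>p\<in>{1..P}. p \<noteq> s \<longrightarrow> x p 1 = 0"
    and X: "\<forall>p. X p = (if p = s then (\<lambda>j. x p j + c * x p j) else x p)"
  shows "grad_entry m P d W y X r 1 = - 3 * psi (y * fnet m P d W X) * (1 + c)^3 * \<alpha>^3 * (W r 1)^2"
proof -
  have sig: "inner_d d (W r) (X s) = (1 + c) * (\<alpha> * y * W r 1)"
    using X d by (simp add: inner_scale xs inner_sig)
  have X1: "X s 1 = (1 + c) * (\<alpha> * y)" using X xs by (simp add: unit_vec_def algebra_simps)
  have "(\<Sum>p=1..P. 3 * (inner_d d (W r) (X p))^2 * X p 1) = (\<Sum>p=1..P. if p = s then 3 * (inner_d d (W r) (X s))^2 * X s 1 else 0)"
    using X xn by (intro sum.cong) auto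
  also have "\<dots> = 3 * ((1 + c) * (\<alpha> * y * W r 1))^2 * ((1 + c) * (\<alpha> * y))"
    using s sig X1 by simp
  finally have e: "(\<Sum>p=1..P. 3 * (inner_d d (W r) (X p))^2 * X p 1) = 3 * ((1 + c) * (\<alpha> * y * W r 1))^2 * ((1 + c) * (\<alpha> * y))" .
  have "y * (3 * ((1 + c) * (\<alpha> * y * W r 1))^2 * ((1 + c) * (\<alpha> * y))) = 3 * (1 + c)^3 * \<alpha>^3 * (W r 1)^2 * y^4"
    by (simp add: power_mult_distrib algebra_simps eval_nat_numeral)
  thus ?thesis using grad1[OF d r, of P W y X] e y4[OF y] by simp
qed

lemma su_grad:
  assumes s: "s \<in> {1..P}" and d: "2 \<le> d" and r: "r \<in> {1..m}"
    and xs: "x s = (\<lambda>j. \<alpha> * y * unit_vec d j)"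
    and xn: "\<forall>p\<in>{1..P}. p \<noteq> s \<longrightarrow> x p 1 = 0"
    and X: "\<forall>p. X p = (if p = s then (\<lambda>j. x p j + c * x p j) else x p)"
  shows "grad_entry m P d W y X r 1 = 0"
proof -
  have "(\<Sum>p=1..P. 3 * (inner_d d (W r) (X p))^2 * X p 1) = 0"
    using X xn xs d by (intro sum.neutral) (auto simp: unit_vec_def)
  thus ?thesis using grad1[of d r m P W y X] d r by simp
qed

lemma telescope_step:
  fixes u u' k p :: real
  assumes k: "k > 0" and u: "u > 0" and inc: "u' \<ge> u + k * u^2 * p" and jump: "u' \<le> 2 * u" and p: "p \<ge> 0"
  shows "p \<le> (2 / k) * (1 / u - 1 / u')" and "u' \<ge> u"
proof -
  have kup: "k * u^2 * p \<ge> 0" using k p by simp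
  show uu: "u' \<ge> u" using inc kup by linarith
  have u'p: "u' > 0" using uu u by linarith
  have "k * u * u' * p \<le> k * u * (2 * u) * p"
    using jump k u p by (intro mult_right_mono mult_left_mono) auto
  also have "\<dots> = 2 * (k * u^2 * p)" by (simp add: power2_eq_square)
  also have "\<dots> \<le> 2 * (u' - u)" proof - have "k * u^2 * p \<le> u' - u" using inc by linarith thus ?thesis by simp qed
  finally have "k * u * u' * p \<le> 2 * (u' - u)" .
  hence "p \<le> 2 * (u' - u) / (k * u * u')" using k u u'p by (simp add: field_simps)
  also have "\<dots> = (2 / k) * (1 / u - 1 / u')" using k u u'p by (simp add: field_simps)
  finally show "p \<le> (2 / k) * (1 / u - 1 / u')" .
qed

lemma telescope:
  fixes u p :: "nat \<Rightarrow> real"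
  assumes k: "k > 0" and u0: "u T0 > 0"
    and step: "\<And>\<tau>. T0 \<le> \<tau> \<Longrightarrow> \<tau> < t \<Longrightarrow> u (Suc \<tau>) \<ge> u \<tau> + k * (u \<tau>)^2 * p \<tau> \<and> u (Suc \<tau>) \<le> 2 * u \<tau>"
    and p: "\<And>\<tau>. p \<tau> \<ge> 0"
  shows "T0 \<le> t' \<Longrightarrow> t' \<le> t \<Longrightarrow> (\<Sum>\<tau>=T0..<t'. p \<tau>) \<le> (2 / k) * (1 / u T0 - 1 / u t') \<and> u t' \<ge> u T0"
proof (induction t')
  case 0
  thus ?case by simp
next
  case (Suc n)
  show ?case
  proof (cases "T0 \<le> n")
    case False
    hence "T0 = Suc n" using Suc.prems by simp
    thus ?thesis by simp
  next
    case True
    have IH: "(\<Sum>\<tau>=T0..<n. p \<tau>) \<le> (2 / k) * (1 / u T0 - 1 / u n)" "u n \<ge> u T0"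
      using Suc.IH[OF True] Suc.prems by auto
    have un: "u n > 0" using IH(2) u0 by linarith
    have st: "u (Suc n) \<ge> u n + k * (u n)^2 * p n" "u (Suc n) \<le> 2 * u n" using step[of n] True Suc.prems by auto
    note ts = telescope_step[OF k un st(1) st(2) p]
    have "(\<Sum>\<tau>=T0..<Suc n. p \<tau>) = (\<Sum>\<tau>=T0..<n. p \<tau>) + p n" using True by simp
    also have "\<dots> \<le> (2 / k) * (1 / u T0 - 1 / u n) + (2 / k) * (1 / u n - 1 / u (Suc n))"
      using IH(1) ts(1) by linarith
    also have "\<dots> = (2 / k) * (1 / u T0 - 1 / u (Suc n))" by (simp add: algebra_simps)
    finally show ?thesis using ts(2) IH(2) by linarith
  qed
qed

lemma psi_pos: "psi z > 0" unfolding psi_def by (simp add: add_pos_pos)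

lemma psi_anti: "a \<le> b \<Longrightarrow> psi b \<le> psi a"
  unfolding psi_def by (simp add: add_pos_pos frac_le)

lemma psi_shift: "0 \<le> a \<Longrightarrow> psi z \<le> exp a * psi (z + a)"
  unfolding psi_def by (simp add: field_simps add_pos_pos exp_add)

lemma psi_exp: "psi z \<le> exp (- z)"
  unfolding psi_def by (simp add: field_simps exp_minus add_pos_pos)

lemma exp2: "exp (2::real) \<le> 9"
proof -
  have "exp (2::real) = exp 1 * exp 1" by (simp flip: exp_add)
  also have "\<dots> \<le> 3 * 3" using exp_le by (intro mult_mono) auto
  finally show ?thesis by simp
qed

lemma logloss_mono: "logloss a \<le> logloss b \<Longrightarrow> b \<le> a"
  unfolding logloss_def by (smt (verit) add_pos_pos exp_gt_zero exp_less_cancel_iff ln_less_cancel_iff)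

lemma w_exp: "(w::real) \<ge> 0 \<Longrightarrow> w * exp (- (w^3 / 16)) \<le> 16"
proof -
  assume w: "w \<ge> 0"
  have "w \<le> 16 + w^3"
  proof (cases "w \<le> 1")
    case True thus ?thesis using w zero_le_power[of w 3] by linarith
  next
    case False
    hence w1: "1 \<le> w" by simp
    have "1 \<le> w^2" using w1 by (simp add: one_le_power)
    hence "w * 1 \<le> w * w^2" using w by (intro mult_left_mono) auto
    hence "w \<le> w^3" by (simp add: power3_eq_cube power2_eq_square)
    thus ?thesis by simp
  qed
  also have "\<dots> \<le> 16 * exp (w^3 / 16)"
  proof -
    have "1 + w^3/16 \<le> exp (w^3/16)" by (rule exp_ge_add_one_self)
    moreover have "16 + w^3 = 16 * (1 + w^3/16)" by simp
    ultimately show ?thesis by linarith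
  qed
  finally have "w \<le> 16 * exp (w^3 / 16)" .
  thus ?thesis by (simp add: exp_minus field_simps)
qed

lemma core:
  fixes N P d m T T0 t i :: nat and \<alpha> \<eta> \<epsilon> C0 \<iota> :: real
    and SL SU :: "nat set" and y :: "nat \<Rightarrow> real" and s :: "nat \<Rightarrow> nat"
    and x :: "nat \<Rightarrow> nat \<Rightarrow> nat \<Rightarrow> real" and W :: "nat \<Rightarrow> nat \<Rightarrow> nat \<Rightarrow> real"
    and Xt :: "nat \<Rightarrow> nat \<Rightarrow> nat \<Rightarrow> nat \<Rightarrow> real"
  assumes C0: "0 < C0" and a: "0 < \<alpha>" and eta: "0 < \<eta>" and eps: "0 < \<epsilon>" and e2: "\<epsilon> / \<alpha> \<le> 1/2"
    and d2: "2 \<le> d" and m1: "1 \<le> m"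
    and part1: "SL \<union> SU = {1..N}" and part2: "SL \<inter> SU = {}"
    and SLc: "real N \<le> 2 * real (card SL)"
    and data: "\<forall>i\<in>{1..N}. y i \<in> {-1, 1} \<and> s i \<in> {1..P}
        \<and> x i (s i) = (\<lambda>j. \<alpha> * y i * (if i \<in> SL then unit_vec 1 j else unit_vec d j))
        \<and> (\<forall>p\<in>{1..P}. p \<noteq> s i \<longrightarrow> x i p 1 = 0 \<and> x i p d = 0)"
    and adv: "\<forall>\<tau> i. i \<in> {1..N} \<longrightarrow> Xt \<tau> i \<in> adm_set d \<epsilon> (s i) (x i)
        \<and> (\<forall>X' \<in> adm_set d \<epsilon> (s i) (x i).
              logloss (y i * fnet m P d (W \<tau>) X') \<le> logloss (y i * fnet m P d (W \<tau>) (Xt \<tau> i)))"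
    and upd: "\<forall>\<tau>. \<forall>r\<in>{1..m}. \<forall>j\<in>{1..d}.
        W (Suc \<tau>) r j = (if j = d then 0 else
           W \<tau> r j - \<eta> / N * (\<Sum>i=1..N. grad_entry m P d (W \<tau>) (y i) (Xt \<tau> i) r j))"
    and init: "\<forall>r\<in>{1..m}. - \<iota> \<le> W 0 r 1" and iota0: "0 \<le> \<iota>"
    and iota: "m * \<iota>^3 \<le> (C0 / (\<alpha> * m powr (1/3)))^3 / 2"
    and T0max: "Max ((\<lambda>r. W T0 r 1) ` {1..m}) > C0 / (\<alpha> * m powr (1/3))"
    and tt: "T0 + 1 \<le> t"
    and noise: "\<forall>\<tau>\<le>t. \<forall>i\<in>SL. \<bar>y i * (\<Sum>r=1..m. \<Sum>p\<in>{1..P}-{s i}. (inner_d d (W \<tau> r) (x i p))^3)\<bar> \<le> 1"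
    and etab: "\<eta> * \<alpha>^2 \<le> 1/486"
    and lnT: "30 * C0 \<le> (ln T) powr (1/3)"
    and iSL: "i \<in> SL"
  shows "(\<Sum>\<tau>=T0..<t. psi (y i * fnet m P d (W \<tau>) (Xt \<tau> i)))
          \<le> 2 * m powr (2/3) * (ln T) powr (1/3) / (C0^2 * (1 - \<epsilon>/\<alpha>)^3 * \<eta> * \<alpha>^2)
      \<and> psi (y i * fnet m P d (W t) (Xt t i)) * (real t - real T0)
          \<le> 4 * m powr (2/3) * (ln T) powr (1/3) / (C0^2 * (1 - \<epsilon>/\<alpha>)^3 * \<eta> * \<alpha>^2)"
proof -
  define e where "e = \<epsilon> / \<alpha>"
  have e0: "0 \<le> e" and e1: "e \<le> 1/2" using eps a e2 by (auto simp: e_def)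
  have eps_e: "\<epsilon> = e * \<alpha>" using a by (simp add: e_def)
  define M where "M \<tau> k = y k * fnet m P d (W \<tau>) (Xt \<tau> k)" for \<tau> k
  define S where "S \<tau> = (\<Sum>r=1..m. (W \<tau> r 1)^3)" for \<tau>
  define nz where "nz \<tau> k = y k * (\<Sum>r=1..m. \<Sum>p\<in>{1..P}-{s k}. (inner_d d (W \<tau> r) (x k p))^3)" for \<tau> k
  define G where "G \<tau> k r = grad_entry m P d (W \<tau>) (y k) (Xt \<tau> k) r 1" for \<tau> k r
  have SLN: "SL \<subseteq> {1..N}" and SUN: "SU \<subseteq> {1..N}" using part1 by auto
  have finSL: "finite SL" and finSU: "finite SU" using SLN SUN finite_subset by auto
  have d1: "1 \<le> d" using d2 by simp
  have SLfacts: "\<exists>c. \<bar>c\<bar> \<le> e \<and> (\<forall>r\<in>{1..m}. G \<tau> k r = - 3 * psi (M \<tau> k) * (1 + c)^3 * \<alpha>^3 * (W \<tau> r 1)^2)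
      \<and> M \<tau> k = (1 + c)^3 * \<alpha>^3 * S \<tau> + nz \<tau> k" if k: "k \<in> SL" for \<tau> k
  proof -
    have kN: "k \<in> {1..N}" using k SLN by auto
    have dk: "y k \<in> {-1, 1}" "s k \<in> {1..P}" "x k (s k) = (\<lambda>j. \<alpha> * y k * unit_vec 1 j)"
      "\<forall>p\<in>{1..P}. p \<noteq> s k \<longrightarrow> x k p 1 = 0"
      using data kN k by auto
    have "Xt \<tau> k \<in> adm_set d \<epsilon> (s k) (x k)" using adv kN by auto
    then obtain c where X: "\<forall>p. Xt \<tau> k p = (if p = s k then (\<lambda>j. x k p j + c * x k p j) else x k p)"
      and cb: "\<forall>j\<in>{1..d}. \<bar>c * x k (s k) j\<bar> \<le> \<epsilon>" unfolding adm_set_def by blast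
    have "\<bar>c * x k (s k) 1\<bar> \<le> \<epsilon>" using cb d1 by auto
    hence "\<bar>c\<bar> * \<alpha> \<le> e * \<alpha>" using dk(1,3) a eps_e by (auto simp: unit_vec_def abs_mult)
    hence c: "\<bar>c\<bar> \<le> e" using a by simp
    show ?thesis
      apply (rule exI[of _ c])
      using c grad_form[OF dk(1) dk(2) d1 _ dk(3) dk(4) X] margin_form[OF dk(1) dk(2) d1 dk(3) X]
      by (auto simp: G_def M_def S_def nz_def)
  qed
  have opt: "M \<tau> k \<le> (1 - e)^3 * \<alpha>^3 * S \<tau> + nz \<tau> k" if k: "k \<in> SL" for \<tau> k
  proof -
    have kN: "k \<in> {1..N}" using k SLN by auto
    have dk: "y k \<in> {-1, 1}" "s k \<in> {1..P}" "x k (s k) = (\<lambda>j. \<alpha> * y k * unit_vec 1 j)"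
      using data kN k by auto
    define X' where "X' = (\<lambda>p. if p = s k then (\<lambda>j. x k p j + (- e) * x k p j) else x k p)"
    have X'f: "\<forall>p. X' p = (if p = s k then (\<lambda>j. x k p j + (- e) * x k p j) else x k p)" by (simp add: X'_def)
    have "\<bar>(- e) * x k (s k) j\<bar> \<le> \<epsilon>" for j
      using dk(1,3) e0 a eps_e by (auto simp: unit_vec_def abs_mult)
    hence "X' \<in> adm_set d \<epsilon> (s k) (x k)" unfolding adm_set_def using X'f by blast
    hence "logloss (y k * fnet m P d (W \<tau>) X') \<le> logloss (M \<tau> k)" using adv kN by (auto simp: M_def)
    hence "M \<tau> k \<le> y k * fnet m P d (W \<tau>) X'" by (rule logloss_mono)
    also have "\<dots> = (1 - e)^3 * \<alpha>^3 * S \<tau> + nz \<tau> k"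
      using margin_form[OF dk(1) dk(2) d1 dk(3) X'f] by (simp add: S_def nz_def)
    finally show ?thesis .
  qed
  have SUgrad: "G \<tau> k r = 0" if k: "k \<in> SU" and r: "r \<in> {1..m}" for \<tau> k r
  proof -
    have kN: "k \<in> {1..N}" using k SUN by auto
    have kL: "k \<notin> SL" using k part2 by auto
    have dk: "s k \<in> {1..P}" "x k (s k) = (\<lambda>j. \<alpha> * y k * unit_vec d j)"
      "\<forall>p\<in>{1..P}. p \<noteq> s k \<longrightarrow> x k p 1 = 0"
      using data kN kL by auto
    have "Xt \<tau> k \<in> adm_set d \<epsilon> (s k) (x k)" using adv kN by auto
    then obtain c where X: "\<forall>p. Xt \<tau> k p = (if p = s k then (\<lambda>j. x k p j + c * x k p j) else x k p)"
      unfolding adm_set_def by blast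
    show ?thesis using su_grad[OF dk(1) d2 r dk(2) dk(3) X] by (simp add: G_def)
  qed
  have Gb: "- 3 * psi (M \<tau> k) * (1 + e)^3 * \<alpha>^3 * (W \<tau> r 1)^2 \<le> G \<tau> k r
          \<and> G \<tau> k r \<le> - 3 * psi (M \<tau> k) * (1 - e)^3 * \<alpha>^3 * (W \<tau> r 1)^2"
    if k: "k \<in> SL" and r: "r \<in> {1..m}" for \<tau> k r
  proof -
    obtain c where c: "\<bar>c\<bar> \<le> e" and G: "G \<tau> k r = - 3 * psi (M \<tau> k) * (1 + c)^3 * \<alpha>^3 * (W \<tau> r 1)^2"
      using SLfacts[OF k, of \<tau>] r by blast
    define K where "K = 3 * psi (M \<tau> k) * \<alpha>^3 * (W \<tau> r 1)^2"
    have K0: "0 \<le> K" using psi_pos[of "M \<tau> k"] a by (simp add: K_def)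
    have "(1 - e)^3 \<le> (1 + c)^3" using c e1 by (intro power_mono) auto
    hence l: "K * (1 - e)^3 \<le> K * (1 + c)^3" using K0 by (rule mult_left_mono)
    have "(1 + c)^3 \<le> (1 + e)^3" using c e1 by (intro power_mono) auto
    hence u: "K * (1 + c)^3 \<le> K * (1 + e)^3" using K0 by (rule mult_left_mono)
    have G': "G \<tau> k r = - (K * (1 + c)^3)" unfolding G K_def by (simp add: algebra_simps)
    have "- 3 * psi (M \<tau> k) * (1 + e)^3 * \<alpha>^3 * (W \<tau> r 1)^2 = - (K * (1 + e)^3)"
      "- 3 * psi (M \<tau> k) * (1 - e)^3 * \<alpha>^3 * (W \<tau> r 1)^2 = - (K * (1 - e)^3)"
      unfolding K_def by (simp_all add: algebra_simps)
    thus ?thesis using l u G' by linarith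
  qed
  have updG: "W (Suc \<tau>) r 1 = W \<tau> r 1 - \<eta> / N * (\<Sum>k\<in>SL. G \<tau> k r)" if r: "r \<in> {1..m}" for \<tau> r
  proof -
    have "(\<Sum>k=1..N. G \<tau> k r) = (\<Sum>k\<in>SL. G \<tau> k r) + (\<Sum>k\<in>SU. G \<tau> k r)"
      using sum.union_disjoint[OF finSL finSU part2, of "\<lambda>k. G \<tau> k r"] part1 by simp
    also have "(\<Sum>k\<in>SU. G \<tau> k r) = 0" using SUgrad r by simp
    finally have "(\<Sum>k=1..N. G \<tau> k r) = (\<Sum>k\<in>SL. G \<tau> k r)" by simp
    moreover have "W (Suc \<tau>) r 1 = W \<tau> r 1 - \<eta> / N * (\<Sum>k=1..N. G \<tau> k r)"
      using upd r d2 by (auto simp: G_def)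
    ultimately show ?thesis by simp
  qed
  have incl: "W (Suc \<tau>) r 1 \<ge> W \<tau> r 1 + \<eta> / N * (\<Sum>k\<in>SL. 3 * psi (M \<tau> k) * (1 - e)^3 * \<alpha>^3 * (W \<tau> r 1)^2)"
    and incu: "W (Suc \<tau>) r 1 \<le> W \<tau> r 1 + \<eta> / N * (\<Sum>k\<in>SL. 3 * psi (M \<tau> k) * (1 + e)^3 * \<alpha>^3 * (W \<tau> r 1)^2)"
    if r: "r \<in> {1..m}" for \<tau> r
  proof -
    have en: "0 \<le> \<eta> / N" using eta by simp
    have "(\<Sum>k\<in>SL. 3 * psi (M \<tau> k) * (1 - e)^3 * \<alpha>^3 * (W \<tau> r 1)^2) \<le> (\<Sum>k\<in>SL. - G \<tau> k r)"
      by (intro sum_mono, drule Gb[OF _ r, of _ \<tau>]) linarith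
    hence "\<eta> / N * (\<Sum>k\<in>SL. 3 * psi (M \<tau> k) * (1 - e)^3 * \<alpha>^3 * (W \<tau> r 1)^2) \<le> \<eta> / N * (\<Sum>k\<in>SL. - G \<tau> k r)"
      using en by (rule mult_left_mono)
    thus "W (Suc \<tau>) r 1 \<ge> W \<tau> r 1 + \<eta> / N * (\<Sum>k\<in>SL. 3 * psi (M \<tau> k) * (1 - e)^3 * \<alpha>^3 * (W \<tau> r 1)^2)"
      using updG[OF r, of \<tau>] by (simp add: sum_negf)
    have "(\<Sum>k\<in>SL. - G \<tau> k r) \<le> (\<Sum>k\<in>SL. 3 * psi (M \<tau> k) * (1 + e)^3 * \<alpha>^3 * (W \<tau> r 1)^2)"
      by (intro sum_mono, drule Gb[OF _ r, of _ \<tau>]) linarith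
    hence "\<eta> / N * (\<Sum>k\<in>SL. - G \<tau> k r) \<le> \<eta> / N * (\<Sum>k\<in>SL. 3 * psi (M \<tau> k) * (1 + e)^3 * \<alpha>^3 * (W \<tau> r 1)^2)"
      using en by (rule mult_left_mono)
    thus "W (Suc \<tau>) r 1 \<le> W \<tau> r 1 + \<eta> / N * (\<Sum>k\<in>SL. 3 * psi (M \<tau> k) * (1 + e)^3 * \<alpha>^3 * (W \<tau> r 1)^2)"
      using updG[OF r, of \<tau>] by (simp add: sum_negf)
  qed
  have mono1: "W \<tau> r 1 \<le> W (Suc \<tau>) r 1" if r: "r \<in> {1..m}" for \<tau> r
  proof -
    have "0 \<le> \<eta> / N * (\<Sum>k\<in>SL. 3 * psi (M \<tau> k) * (1 - e)^3 * \<alpha>^3 * (W \<tau> r 1)^2)"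
      using eta e1 psi_pos a by (intro mult_nonneg_nonneg sum_nonneg) (auto intro: less_imp_le)
    thus ?thesis using incl[OF r, of \<tau>] by linarith
  qed
  have monoW: "W \<tau>1 r 1 \<le> W \<tau>2 r 1" if r: "r \<in> {1..m}" and le: "\<tau>1 \<le> \<tau>2" for \<tau>1 \<tau>2 r
    using lift_Suc_mono_le[of "\<lambda>\<tau>. W \<tau> r 1", OF mono1[OF r] le] by simp
  have Wlow: "- \<iota> \<le> W \<tau> r 1" if r: "r \<in> {1..m}" for \<tau> r
    using init r monoW[OF r, of 0 \<tau>] by force
  have Slow: "S \<tau> \<ge> (W \<tau> r 1)^3 - m * \<iota>^3" if r: "r \<in> {1..m}" for \<tau> r
  proof -
    have cube: "- (\<iota>^3) \<le> (W \<tau> r' 1)^3" if "r' \<in> {1..m}" for r'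
      using power_mono_odd[of 3 "- \<iota>" "W \<tau> r' 1"] Wlow[OF that] by simp
    have "S \<tau> = (W \<tau> r 1)^3 + (\<Sum>r'\<in>{1..m}-{r}. (W \<tau> r' 1)^3)"
      unfolding S_def using sum.remove[of "{1..m}" r "\<lambda>r'. (W \<tau> r' 1)^3"] r by simp
    moreover have "(\<Sum>r'\<in>{1..m}-{r}. (W \<tau> r' 1)^3) \<ge> (\<Sum>r'\<in>{1..m}-{r}. - (\<iota>^3))"
      using cube by (intro sum_mono) auto
    moreover have "(\<Sum>r'\<in>{1..m}-{r}. - (\<iota>^3)) = - (real (m - 1) * \<iota>^3)" using r by simp
    moreover have "real (m - 1) * \<iota>^3 \<le> m * \<iota>^3" using iota0 m1 by (intro mult_right_mono) auto
    ultimately show ?thesis by linarith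
  qed
  have Smono: "S \<tau>1 \<le> S \<tau>2" if le: "\<tau>1 \<le> \<tau>2" for \<tau>1 \<tau>2
    unfolding S_def using monoW[OF _ le] by (intro sum_mono power_mono_odd) auto
  define A where "A = C0 / (\<alpha> * m powr (1/3))"
  have m13: "1 \<le> m powr (1/3)" using m1 by (simp add: ge_one_powr_ge_zero)
  have A0: "0 < A" unfolding A_def using C0 a m13 m1 by (intro divide_pos_pos mult_pos_pos) auto
  obtain rs where rs: "rs \<in> {1..m}" and rsmax: "W T0 rs 1 = Max ((\<lambda>r. W T0 r 1) ` {1..m})"
  proof -
    have "Max ((\<lambda>r. W T0 r 1) ` {1..m}) \<in> (\<lambda>r. W T0 r 1) ` {1..m}"
      using m1 by (intro Max_in) auto
    thus ?thesis using that by (metis (no_types, lifting) imageE)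
  qed
  define U where "U \<tau> = W \<tau> rs 1" for \<tau>
  have UT0: "U T0 > A" using T0max rsmax by (simp add: U_def A_def)
  have Umono: "U T0 \<le> U \<tau>" if "T0 \<le> \<tau>" for \<tau> using monoW[OF rs that] by (simp add: U_def)
  have Upos: "U \<tau> > A" if "T0 \<le> \<tau>" for \<tau> using Umono[OF that] UT0 by linarith
  have Spos: "S \<tau> \<ge> (U \<tau>)^3 / 2" if "T0 \<le> \<tau>" for \<tau>
  proof -
    have "A^3 \<le> (U \<tau>)^3" using Upos[OF that] A0 by (intro power_mono) auto
    moreover have "m * \<iota>^3 \<le> A^3 / 2" using iota by (simp add: A_def)
    ultimately show ?thesis using Slow[OF rs, of \<tau>] by (simp add: U_def)
  qed
  have S0: "S \<tau> \<ge> 0" if "T0 \<le> \<tau>" for \<tau>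
    using Spos[OF that] Upos[OF that] A0 by (smt (verit) zero_le_power divide_nonneg_pos)
  have iN: "i \<in> {1..N}" using iSL SLN by auto
  have N1: "1 \<le> N" using iN by simp
  have cardSL: "card SL \<le> N" using card_mono[OF _ SLN] by simp
  have Mlow: "M \<tau> k \<ge> (1 - e)^3 * \<alpha>^3 * S \<tau> - 1" if k: "k \<in> SL" and "T0 \<le> \<tau>" "\<tau> \<le> t" for \<tau> k
  proof -
    obtain c where c: "\<bar>c\<bar> \<le> e" and Mf: "M \<tau> k = (1 + c)^3 * \<alpha>^3 * S \<tau> + nz \<tau> k"
      using SLfacts[OF k, of \<tau>] by blast
    have "(1 - e)^3 \<le> (1 + c)^3" using c e1 by (intro power_mono) auto
    moreover have "0 \<le> \<alpha>^3 * S \<tau>" using a S0[OF that(2)] by simp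
    ultimately have "(1 - e)^3 * (\<alpha>^3 * S \<tau>) \<le> (1 + c)^3 * (\<alpha>^3 * S \<tau>)" by (rule mult_right_mono)
    moreover have "nz \<tau> k \<ge> - 1" using noise that k by (force simp: nz_def)
    ultimately show ?thesis using Mf by (simp add: algebra_simps)
  qed
  have Mup: "M \<tau> k \<le> (1 - e)^3 * \<alpha>^3 * S \<tau> + 1" if k: "k \<in> SL" and "\<tau> \<le> t" for \<tau> k
  proof -
    have "nz \<tau> k \<le> 1" using noise that k by (force simp: nz_def)
    thus ?thesis using opt[OF k, of \<tau>] by linarith
  qed
  have comp: "psi (M \<tau> i) \<le> 9 * psi (M \<tau> k)" if k: "k \<in> SL" and "T0 \<le> \<tau>" "\<tau> \<le> t" for \<tau> k
  proof -
    have "M \<tau> k \<le> M \<tau> i + 2" using Mup[OF k that(3)] Mlow[OF iSL that(2,3)] by linarith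
    hence "psi (M \<tau> i + 2) \<le> psi (M \<tau> k)" by (rule psi_anti)
    hence "exp 2 * psi (M \<tau> i + 2) \<le> exp 2 * psi (M \<tau> k)" by simp
    moreover have "exp 2 * psi (M \<tau> k) \<le> 9 * psi (M \<tau> k)"
      using exp2 psi_pos[of "M \<tau> k"] by (intro mult_right_mono) auto
    ultimately show ?thesis using psi_shift[of 2 "M \<tau> i"] by linarith
  qed
  define kk where "kk = \<eta> * \<alpha>^3 * (1 - e)^3 / 6"
  have kk0: "0 < kk" using eta a e1 by (simp add: kk_def)
  have lowstep: "U (Suc \<tau>) \<ge> U \<tau> + kk * (U \<tau>)^2 * psi (M \<tau> i)" if "T0 \<le> \<tau>" "\<tau> < t" for \<tau>
  proof -
    define X where "X = psi (M \<tau> i) / 3 * (1 - e)^3 * \<alpha>^3 * (U \<tau>)^2"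
    have X0: "0 \<le> X" using psi_pos[of "M \<tau> i"] e1 a by (simp add: X_def)
    have "(\<Sum>k\<in>SL. X) \<le> (\<Sum>k\<in>SL. 3 * psi (M \<tau> k) * (1 - e)^3 * \<alpha>^3 * (W \<tau> rs 1)^2)"
    proof (intro sum_mono)
      fix k assume k: "k \<in> SL"
      have "psi (M \<tau> i) / 3 \<le> 3 * psi (M \<tau> k)" using comp[OF k that(1)] that(2) by simp
      moreover have "0 \<le> (1 - e)^3 * \<alpha>^3 * (U \<tau>)^2" using e1 a by simp
      ultimately have "psi (M \<tau> i) / 3 * ((1 - e)^3 * \<alpha>^3 * (U \<tau>)^2) \<le> 3 * psi (M \<tau> k) * ((1 - e)^3 * \<alpha>^3 * (U \<tau>)^2)"
        by (rule mult_right_mono)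
      thus "X \<le> 3 * psi (M \<tau> k) * (1 - e)^3 * \<alpha>^3 * (W \<tau> rs 1)^2" by (simp add: X_def U_def algebra_simps)
    qed
    hence "\<eta> / N * (card SL * X) \<le> \<eta> / N * (\<Sum>k\<in>SL. 3 * psi (M \<tau> k) * (1 - e)^3 * \<alpha>^3 * (W \<tau> rs 1)^2)"
      using eta by (intro mult_left_mono) auto
    moreover have "\<eta> / 2 * X \<le> \<eta> / N * (card SL * X)"
    proof -
      have "\<eta> / 2 \<le> \<eta> / N * card SL" using SLc eta N1 by (simp add: field_simps)
      thus ?thesis using X0 by (metis mult.assoc mult_right_mono)
    qed
    moreover have "\<eta> / 2 * X = kk * (U \<tau>)^2 * psi (M \<tau> i)" by (simp add: X_def kk_def)
    ultimately show ?thesis using incl[OF rs, of \<tau>] unfolding U_def by linarith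
  qed
  have jump: "U (Suc \<tau>) \<le> 2 * U \<tau>" if T0le: "T0 \<le> \<tau>" and tlt: "\<tau> < t" for \<tau>
  proof -
    define w where "w = \<alpha> * U \<tau>"
    have U0: "0 < U \<tau>" using Upos[OF T0le] A0 by linarith
    have w0: "0 \<le> w" using a U0 by (simp add: w_def)
    define E where "E = exp (- (w^3 / 16))"
    have E0: "0 \<le> E" by (simp add: E_def)
    have psib: "psi (M \<tau> k) \<le> 3 * E" if k: "k \<in> SL" for k
    proof -
      have e8: "1/8 \<le> (1 - e)^3"
      proof -
        have "(1/2::real)^3 \<le> (1 - e)^3" using e1 by (intro power_mono) auto
        thus ?thesis by (simp add: power3_eq_cube)
      qed
      have h1: "\<alpha>^3 * ((U \<tau>)^3 / 2) \<le> \<alpha>^3 * S \<tau>" using Spos[OF T0le] a by simp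
      have h0: "0 \<le> \<alpha>^3 * ((U \<tau>)^3 / 2)" using a U0 by simp
      have h2: "0 \<le> (1 - e)^3" using e1 by simp
      have "1/8 * (\<alpha>^3 * ((U \<tau>)^3 / 2)) \<le> (1 - e)^3 * (\<alpha>^3 * S \<tau>)"
        by (rule mult_mono[OF e8 h1 h2 h0])
      moreover have "1/8 * (\<alpha>^3 * ((U \<tau>)^3 / 2)) = w^3 / 16" by (simp add: w_def power_mult_distrib)
      ultimately have "w^3 / 16 - 1 \<le> M \<tau> k" using Mlow[OF k T0le] tlt by (simp add: algebra_simps)
      hence "psi (M \<tau> k) \<le> psi (w^3 / 16 - 1)" by (rule psi_anti)
      also have "\<dots> \<le> exp (- (w^3 / 16 - 1))" by (rule psi_exp)
      also have "\<dots> = exp 1 * E" by (simp add: E_def flip: exp_add)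
      also have "\<dots> \<le> 3 * E" using exp_le E0 by (intro mult_right_mono) auto
      finally show ?thesis .
    qed
    have e27: "(1 + e)^3 \<le> 27/8"
    proof -
      have "(1 + e)^3 \<le> (3/2::real)^3" using e0 e1 by (intro power_mono) auto
      thus ?thesis by (simp add: power3_eq_cube)
    qed
    define Y where "Y = 3 * (3 * E) * (27/8) * \<alpha>^3 * (U \<tau>)^2"
    have Y0: "0 \<le> Y" using E0 a by (simp add: Y_def)
    have "(\<Sum>k\<in>SL. 3 * psi (M \<tau> k) * (1 + e)^3 * \<alpha>^3 * (W \<tau> rs 1)^2) \<le> (\<Sum>k\<in>SL. Y)"
    proof (intro sum_mono)
      fix k assume k: "k \<in> SL"
      have "3 * psi (M \<tau> k) * (1 + e)^3 \<le> 3 * (3 * E) * (27/8)"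
        using psib[OF k] e27 psi_pos[of "M \<tau> k"] e0 by (intro mult_mono) auto
      moreover have "0 \<le> \<alpha>^3 * (U \<tau>)^2" using a by simp
      ultimately have "3 * psi (M \<tau> k) * (1 + e)^3 * (\<alpha>^3 * (U \<tau>)^2) \<le> 3 * (3 * E) * (27/8) * (\<alpha>^3 * (U \<tau>)^2)"
        by (rule mult_right_mono)
      thus "3 * psi (M \<tau> k) * (1 + e)^3 * \<alpha>^3 * (W \<tau> rs 1)^2 \<le> Y" by (simp add: Y_def U_def algebra_simps)
    qed
    hence "\<eta> / N * (\<Sum>k\<in>SL. 3 * psi (M \<tau> k) * (1 + e)^3 * \<alpha>^3 * (W \<tau> rs 1)^2) \<le> \<eta> / N * (card SL * Y)"
      using eta by (intro mult_left_mono) auto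
    moreover have "\<eta> / N * (card SL * Y) \<le> \<eta> * Y"
    proof -
      have "\<eta> / N * card SL \<le> \<eta>" using cardSL eta N1 by (simp add: field_simps)
      thus ?thesis using Y0 by (metis mult.assoc mult_right_mono)
    qed
    moreover have "\<eta> * Y \<le> U \<tau>"
    proof -
      have "\<eta> * Y = (243/8) * (\<eta> * \<alpha>^2) * U \<tau> * (w * E)"
        by (simp add: Y_def w_def power2_eq_square power3_eq_cube algebra_simps)
      also have "\<dots> \<le> (243/8) * (\<eta> * \<alpha>^2) * U \<tau> * 16"
        using w_exp[OF w0] eta a U0 by (intro mult_left_mono) (auto simp: E_def)
      also have "\<dots> = 486 * (\<eta> * \<alpha>^2) * U \<tau>" by simp
      also have "\<dots> \<le> 486 * (1/486) * U \<tau>" using etab U0 by (intro mult_right_mono) auto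
      finally show ?thesis by simp
    qed
    ultimately show ?thesis using incu[OF rs, of \<tau>] unfolding U_def by linarith
  qed
  have tel: "(\<Sum>\<tau>=T0..<t. psi (M \<tau> i)) \<le> (2 / kk) * (1 / U T0 - 1 / U t) \<and> U t \<ge> U T0"
    using telescope[of kk U T0 t "\<lambda>\<tau>. psi (M \<tau> i)" t] kk0 UT0 A0 lowstep jump psi_pos tt
    by (auto intro: less_imp_le)
  define Q where "Q = (1 - e)^3 * \<eta> * \<alpha>^2"
  have Q0: "0 < Q" using e1 eta a by (simp add: Q_def)
  define m13 where "m13 = m powr (1/3)"
  define L3 where "L3 = (ln T) powr (1/3)"
  have m23: "m powr (2/3) = m13 * m13" unfolding m13_def by (simp flip: powr_add)
  have sum1: "(\<Sum>\<tau>=T0..<t. psi (M \<tau> i)) \<le> 12 * m13 / (C0 * Q)"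
  proof -
    have UtA: "0 < U t" using Upos[of t] tt A0 by force
    have "(2 / kk) * (1 / U T0 - 1 / U t) \<le> (2 / kk) * (1 / A)"
    proof (intro mult_left_mono)
      have "1 / U T0 \<le> 1 / A" using UT0 A0 by (simp add: frac_le)
      thus "1 / U T0 - 1 / U t \<le> 1 / A" using UtA by (smt (verit) divide_pos_pos)
    qed (use kk0 in auto)
    also have "\<dots> = 12 * m13 / (C0 * Q)"
    proof -
      define q where "q = (1 - e)^3"
      have q0: "0 < q" using e1 by (simp add: q_def)
      have mp: "0 < m powr (1/3)" using m13 by linarith
      show ?thesis unfolding kk_def A_def Q_def m13_def q_def[symmetric]
        using a q0 C0 eta mp by (simp add: field_simps power2_eq_square power3_eq_cube)
    qed
    finally show ?thesis using tel by linarith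
  qed
  have L3: "30 * C0 \<le> L3" using lnT by (simp add: L3_def)
  have m13p: "1 \<le> m13" using m13 by (simp add: m13_def)
  have CQ: "0 < C0 * Q" using C0 Q0 by simp
  have mL: "30 * C0 \<le> m13 * L3"
  proof -
    have "1 * L3 \<le> m13 * L3" using m13p L3 C0 by (intro mult_right_mono) auto
    thus ?thesis using L3 by linarith
  qed
  have den: "C0^2 * (1 - \<epsilon>/\<alpha>)^3 * \<eta> * \<alpha>^2 = C0 * (C0 * Q)"
    by (simp add: Q_def e_def power2_eq_square algebra_simps)
  have key: "c * m13 / (C0 * Q) \<le> b * (m13 * m13) * L3 / (C0 * (C0 * Q))" if cb: "c * C0 \<le> b * (m13 * L3)" and c0: "0 \<le> c" for b c :: real
  proof -
    have "c \<le> b * m13 * L3 / C0" using cb C0 by (simp add: field_simps)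
    hence "c * (m13 / (C0 * Q)) \<le> (b * m13 * L3 / C0) * (m13 / (C0 * Q))"
      using CQ m13p by (intro mult_right_mono) auto
    thus ?thesis by (simp add: field_simps)
  qed
  have c1: "(\<Sum>\<tau>=T0..<t. psi (M \<tau> i)) \<le> 2 * m powr (2/3) * L3 / (C0^2 * (1 - \<epsilon>/\<alpha>)^3 * \<eta> * \<alpha>^2)"
  proof -
    have "12 * m13 / (C0 * Q) \<le> 2 * (m13 * m13) * L3 / (C0 * (C0 * Q))"
      by (rule key) (use mL C0 in \<open>auto simp: mult.commute\<close>)
    thus ?thesis using sum1 unfolding den m23 by linarith
  qed
  have tmono: "psi (M t i) \<le> 9 * psi (M \<tau> i)" if "T0 \<le> \<tau>" "\<tau> < t" for \<tau>
  proof -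
    have tT: "T0 \<le> t" using tt by simp
    have "(1 - e)^3 * \<alpha>^3 * S \<tau> \<le> (1 - e)^3 * \<alpha>^3 * S t"
      using Smono[of \<tau> t] that e1 a by (intro mult_left_mono) auto
    hence "M \<tau> i - 2 \<le> M t i" using Mlow[OF iSL tT] Mup[OF iSL, of \<tau>] that by simp
    hence "psi (M t i) \<le> psi (M \<tau> i - 2)" by (rule psi_anti)
    also have "\<dots> \<le> exp 2 * psi (M \<tau> i - 2 + 2)" by (rule psi_shift) simp
    also have "\<dots> \<le> 9 * psi (M \<tau> i)" using exp2 psi_pos[of "M \<tau> i"] by simp
    finally show ?thesis .
  qed
  have c2: "psi (M t i) * (real t - real T0) \<le> 4 * m powr (2/3) * L3 / (C0^2 * (1 - \<epsilon>/\<alpha>)^3 * \<eta> * \<alpha>^2)"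
  proof -
    have "psi (M t i) * (real t - real T0) = (\<Sum>\<tau>=T0..<t. psi (M t i))"
      using tt by (simp add: of_nat_diff)
    also have "\<dots> \<le> (\<Sum>\<tau>=T0..<t. 9 * psi (M \<tau> i))" using tmono by (intro sum_mono) auto
    also have "\<dots> = 9 * (\<Sum>\<tau>=T0..<t. psi (M \<tau> i))" by (simp add: sum_distrib_left)
    also have "\<dots> \<le> 9 * (12 * m13 / (C0 * Q))" using sum1 by simp
    also have "\<dots> = 108 * m13 / (C0 * Q)" by simp
    also have "\<dots> \<le> 4 * (m13 * m13) * L3 / (C0 * (C0 * Q))"
      by (rule key) (use mL C0 in \<open>auto simp: mult.commute\<close>)
    finally show ?thesis unfolding den m23 .
  qed
  show ?thesis using c1 c2 unfolding M_def L3_def by simp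
qed

lemma ln2_half: "1/2 \<le> ln (2::real)"
proof -
  have "exp (1/2::real) * exp (1/2) = exp 1" by (simp flip: exp_add)
  also have "\<dots> \<le> 2 * 2" using exp_le by simp
  finally have "exp (1/2::real) \<le> 2"
    by (metis exp_gt_zero less_eq_real_def mult_mono not_le zero_le_numeral mult_strict_mono)
  thus ?thesis by (metis exp_le_cancel_iff exp_ln zero_less_numeral)
qed

lemma cube_sum: "0 \<le> a \<Longrightarrow> 0 \<le> b \<Longrightarrow> (a + b)^3 \<le> 4 * (a^3 + (b::real)^3)"
proof -
  assume a: "0 \<le> a" and b: "0 \<le> b"
  have "0 \<le> (a + b) * (a - b)^2" using a b by simp
  thus ?thesis by (simp add: power2_eq_square power3_eq_cube algebra_simps)
qed

lemma div_delta: "0 \<le> (x::real) \<Longrightarrow> 0 < \<delta> \<Longrightarrow> \<delta> \<le> 1 \<Longrightarrow> x \<le> x / \<delta>"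
  using mult_left_le[of \<delta> x] by (simp add: le_divide_eq mult.commute)

lemma cm: "0 < (C::real) \<Longrightarrow> 0 < L \<Longrightarrow> x \<le> (1/C) * m' / L \<Longrightarrow> m' \<le> b \<Longrightarrow> x \<le> (1/C) * b / L"
proof -
  assume a: "0 < C" "0 < L" "x \<le> (1/C) * m' / L" "m' \<le> b"
  have "(1/C) * m' \<le> (1/C) * b" using a by (intro mult_left_mono) auto
  hence "(1/C) * m' / L \<le> (1/C) * b / L" using a by (intro divide_right_mono) auto
  thus ?thesis using a by linarith
qed

lemma params1:
  fixes N P d m T :: nat and C C0 \<alpha> sn s0 \<eta> \<epsilon> \<Gamma> \<delta> pun :: real
  assumes C: "10^12 \<le> C" "exp (27000 * C0^3) \<le> C" and C0: "1 \<le> C0"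
    and pos: "0 < \<alpha>" "0 < sn" "0 < s0" "0 < \<eta>" "0 < \<epsilon>" "0 < \<delta>" "\<delta> < 1"
    and std: "std_conditions C N P d m \<alpha> sn s0 \<eta> \<epsilon> \<Gamma> \<delta> T pun"
    and N1: "1 \<le> N" and T1: "1 \<le> T"
  shows "2 \<le> d \<and> 1 \<le> m \<and> \<epsilon> / \<alpha> \<le> 1/2 \<and> \<eta> * \<alpha>^2 \<le> 1/486 \<and> 30 * C0 \<le> (ln T) powr (1/3)
     \<and> C \<le> real T \<and> 1 \<le> ln (real T * real N * real m * real P / \<delta>)
     \<and> 1 \<le> ln (real T * real d * real N * real m * real P / \<delta>)"
proof -
  define La where "La = ln (real T * real N * real m * real P / \<delta>)"
  define Lb where "Lb = ln (real T * real d * real N * real m * real P / \<delta>)"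
  note S = std[unfolded std_conditions_def of_nat_mult, folded La_def Lb_def]
  have P2: "2 \<le> P" and PC: "real P \<le> C" using S by auto
  have C0p: "0 < C" using C by simp
  have Cb: "1000000000000 \<le> C" using C(1) by simp
  have m1: "1 \<le> m"
  proof -
    have "0 < N * P" using N1 P2 by simp
    hence "1 \<le> real (N * P)" by linarith
    hence "\<delta> < real N * real P" using pos by simp
    hence "1 < real N * real P / \<delta>" using pos by (simp add: field_simps)
    hence "0 < ln (real N * real P / \<delta>)" by simp
    hence "0 < C * ln (real N * real P / \<delta>)" using C0p by simp
    moreover have "C * ln (real N * real P / \<delta>) \<le> m" using S by auto
    ultimately show ?thesis by simp
  qed
  have x2: "2 \<le> real T * real N * real m * real P / \<delta>"
  proof -
    have "2 \<le> real T * real N * real m * real P"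
      using T1 N1 m1 P2 by (metis (mono_tags) le_trans mult_le_mono mult_1 numeral_le_iff of_nat_le_iff of_nat_mult of_nat_numeral)
    also have "\<dots> \<le> real T * real N * real m * real P / \<delta>" using pos by (intro div_delta) auto
    finally show ?thesis .
  qed
  have La2: "1/2 \<le> La" using x2 ln2_half unfolding La_def
    by (smt (verit) ln_le_cancel_iff)
  have dpos: "0 < real d"
  proof -
    have "0 < C * real m ^ 2 * real P ^ 2 * real N ^ 2 * La ^ 4" using C0p m1 P2 N1 La2 by simp
    thus ?thesis using S by linarith
  qed
  hence d1: "1 \<le> d" by simp
  have LaLb: "La \<le> Lb"
  proof -
    have "real T * real N * real m * real P \<le> real T * real d * real N * real m * real P"
      using mult_right_mono[of 1 "real d" "real T * real N * real m * real P"] d1 by (simp add: algebra_simps)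
    hence "real T * real N * real m * real P / \<delta> \<le> real T * real d * real N * real m * real P / \<delta>"
      using pos by (intro divide_right_mono) auto
    thus ?thesis unfolding La_def Lb_def using x2 by simp
  qed
  have La0: "0 < La" using La2 by simp
  have Lb0: "0 < Lb" using La2 LaLb by simp
  have iC: "0 < 1 / C" using C0p by simp
  have minr: "(1/C) * min a b / L \<le> (1/C) * b / L" "(1/C) * min a b / L \<le> (1/C) * a / L" if "0 < L" for a b L :: real
    using that iC by (auto intro!: divide_right_mono mult_left_mono)
  have Seta: "\<eta> \<le> (1/C) * min (1 / (\<alpha>^3 * s0)) (min (1 / (sn^2 * real d)) (1 / \<alpha>^2)) / La"
    using S by blast
  have eta1: "\<eta> \<le> (1/C) * (1/(sn^2 * real d)) / La" and eta2: "\<eta> \<le> (1/C) * (1/\<alpha>^2) / La"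
    by (rule cm[OF C0p La0 Seta], simp)+
  have Ss0: "s0 \<le> (1/C) * min (1 / (real m powr (2/3) * real P powr (2/3) * sn * sqrt (real d)))
                 (min (1 / (\<alpha> * real m powr (2/3))) (1 / (sn * real m^2 * sqrt (real P) * real d))) / Lb"
    using S by blast
  have s01: "s0 \<le> (1/C) * (1 / (real m powr (2/3) * real P powr (2/3) * sn * sqrt (real d))) / Lb"
    by (rule cm[OF C0p Lb0 Ss0], simp)
  have s02: "s0 \<le> (1/C) * (1 / (\<alpha> * real m powr (2/3))) / Lb"
    by (rule cm[OF C0p Lb0 Ss0], simp)
  have mp23: "1 \<le> real m powr (2/3)" "1 \<le> real P powr (2/3)" using m1 P2 by (auto intro!: ge_one_powr_ge_zero)
  have sqd: "0 < sqrt (real d)" using dpos by simp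
  have A1: "\<eta> * (sn^2 * real d) \<le> 2 / C"
  proof -
    have "\<eta> * (sn^2 * real d) \<le> (1/C) * (1/(sn^2 * real d)) / La * (sn^2 * real d)"
      using eta1 pos dpos by (intro mult_right_mono) auto
    also have "\<dots> = 1 / (C * La)" using pos dpos La0 C0p by (simp add: field_simps)
    also have "\<dots> \<le> 2 / C" using La2 C0p by (simp add: field_simps)
    finally show ?thesis .
  qed
  have A2: "s0 * (sn * sqrt (real d)) \<le> 2 / C"
  proof -
    define q where "q = real m powr (2/3) * real P powr (2/3)"
    have q1: "1 \<le> q" using mp23 unfolding q_def by (metis mult_mono' mult_1 zero_le_one)
    have "s0 * (sn * sqrt (real d)) \<le> (1/C) * (1 / (q * sn * sqrt (real d))) / Lb * (sn * sqrt (real d))"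
      using s01 pos sqd unfolding q_def by (intro mult_right_mono) auto
    also have "\<dots> = 1 / (C * q * Lb)" using pos sqd Lb0 C0p q1 by (simp add: field_simps)
    also have "\<dots> \<le> 2 / C"
    proof -
      have "1 * (1/2) \<le> q * Lb" using q1 La2 LaLb by (intro mult_mono) auto
      thus ?thesis using C0p q1 Lb0 by (simp add: field_simps)
    qed
    finally show ?thesis .
  qed
  have d32: "real d powr (3/2) = real d * sqrt (real d)"
  proof -
    have "real d powr (3/2) = real d powr (1 + 1/2)" by simp
    also have "\<dots> = real d powr 1 * real d powr (1/2)" by (rule powr_add)
    also have "\<dots> = real d * sqrt (real d)" using dpos by (simp add: powr_half_sqrt)
    finally show ?thesis .
  qed
  have Z: "\<eta> * s0 * sn^3 * real d powr (3/2) \<le> 1"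
  proof -
    have "\<eta> * s0 * sn^3 * real d powr (3/2) = (\<eta> * (sn^2 * real d)) * (s0 * (sn * sqrt (real d)))"
      by (simp add: d32 power2_eq_square power3_eq_cube algebra_simps)
    also have "\<dots> \<le> (2 / C) * (2 / C)" using A1 A2 pos dpos C0p by (intro mult_mono) auto
    also have "\<dots> \<le> 1"
    proof -
      have "2 * 2 \<le> C * C" using C(1) by (intro mult_mono) auto
      thus ?thesis using C0p by (simp add: field_simps)
    qed
    finally show ?thesis .
  qed
  have Z0: "0 < \<eta> * s0 * sn^3 * real d powr (3/2)" using pos dpos by simp
  have TC: "C \<le> real T"
  proof -
    have "C \<le> C * real N" using N1 C0p by simp
    also have "\<dots> \<le> C * real N / (\<eta> * s0 * sn^3 * real d powr (3/2))"
      using Z Z0 C0p N1 by (simp add: le_divide_eq)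
    also have "\<dots> \<le> real T" using S by blast
    finally show ?thesis .
  qed
  have T0p: "0 < real T" using T1 by simp
  have lnTC: "ln C \<le> ln (real T)" using TC C0p by simp
  have lnC: "27000 * C0^3 \<le> ln C" using C(2) C0p by (metis exp_le_cancel_iff exp_ln)
  have lnC1: "1 \<le> ln C"
  proof -
    have "(3::real) \<le> C" using C(1) by simp
    hence "exp 1 \<le> C" using exp_le by linarith
    thus ?thesis using C0p by (metis exp_le_cancel_iff exp_ln)
  qed
  have TLa: "ln (real T) \<le> La"
  proof -
    have "1 \<le> real N * real m * real P" using N1 m1 P2
      by (metis (mono_tags) le_trans mult_le_mono mult_1 one_le_numeral of_nat_1 of_nat_le_iff of_nat_mult)
    hence "real T \<le> real T * (real N * real m * real P)" using T0p by simp
    also have "\<dots> = real T * real N * real m * real P" by (simp add: mult.assoc)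
    also have "\<dots> \<le> real T * real N * real m * real P / \<delta>" using pos T0p by (intro div_delta) auto
    finally show ?thesis unfolding La_def using T0p by simp
  qed
  have La1: "1 \<le> La" using lnC1 lnTC TLa by linarith
  have Lb1: "1 \<le> Lb" using La1 LaLb by linarith
  have d2: "2 \<le> d"
  proof -
    have "1 \<le> real m ^ 2" "1 \<le> real P ^ 2" "1 \<le> real N ^ 2" "1 \<le> La ^ 4"
      using m1 P2 N1 La1 by (auto simp: one_le_power)
    hence "1 \<le> real m ^ 2 * real P ^ 2 * real N ^ 2 * La ^ 4"
      by (metis mult_mono' mult_1 zero_le_one)
    hence "C * 1 \<le> C * (real m ^ 2 * real P ^ 2 * real N ^ 2 * La ^ 4)" using C0p by (intro mult_left_mono) auto
    moreover have "C * real m ^ 2 * real P ^ 2 * real N ^ 2 * La ^ 4 \<le> real d" using S by blast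
    ultimately have "C \<le> real d" by (simp add: mult.assoc)
    hence "2 \<le> real d" using Cb by linarith
    thus ?thesis by simp
  qed
  have etab: "\<eta> * \<alpha>^2 \<le> 1/486"
  proof -
    have "\<eta> * \<alpha>^2 \<le> (1/C) * (1/\<alpha>^2) / La * \<alpha>^2" using eta2 pos by (intro mult_right_mono) auto
    also have "\<dots> = 1 / (C * La)" using pos La0 C0p by (simp add: field_simps)
    also have "\<dots> \<le> 1 / C" using La1 C0p by (simp add: field_simps)
    also have "\<dots> \<le> 1/486" using Cb by (intro divide_left_mono) auto
    finally show ?thesis .
  qed
  have eb: "\<epsilon> / \<alpha> \<le> 1/2"
  proof -
    have "\<epsilon> < 1 / C * min \<alpha> (1 / (real m * s0 * real d))" using S by blast
    also have "\<dots> \<le> 1 / C * \<alpha>" using C0p by (intro mult_left_mono) auto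
    also have "\<dots> \<le> \<alpha> / 2"
    proof -
      have "1 / C \<le> 1 / 2" using Cb by (intro divide_left_mono) auto
      thus ?thesis using pos by (metis mult.commute mult_left_mono less_imp_le times_divide_eq_right mult_1_right)
    qed
    finally show ?thesis using pos by (simp add: field_simps)
  qed
  have L3: "30 * C0 \<le> (ln (real T)) powr (1/3)"
  proof -
    have c0: "0 \<le> 30 * C0" using C0 by simp
    have "(30 * C0) = ((30 * C0) ^ 3) powr (1/3)"
    proof -
      have "((30 * C0) ^ 3) powr (1/3) = ((30 * C0) powr (real 3)) powr (1/3)"
        using c0 by (subst powr_realpow') auto
      also have "\<dots> = (30 * C0) powr 1" by (simp add: powr_powr)
      also have "\<dots> = 30 * C0" using C0 by simp
      finally show ?thesis by simp
    qed
    also have "\<dots> \<le> (ln (real T)) powr (1/3)"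
      using lnC lnTC c0 by (intro powr_mono2) (auto simp: power_mult_distrib)
    finally show ?thesis .
  qed
  show ?thesis using d2 m1 eb etab L3 TC La1 Lb1 unfolding La_def Lb_def by auto
qed

lemma sqrt_le_self: "1 \<le> (x::real) \<Longrightarrow> sqrt x \<le> x"
proof -
  assume x: "1 \<le> x"
  have "x * 1 \<le> x * x" using x by (intro mult_left_mono) auto
  hence "sqrt x \<le> sqrt (x * x)" by (intro real_sqrt_le_mono) simp
  thus ?thesis using x by simp
qed

lemma ln_ge1: "3 \<le> (x::real) \<Longrightarrow> 1 \<le> ln x"
proof -
  assume "3 \<le> x"
  hence "exp 1 \<le> x" using exp_le by linarith
  thus ?thesis by (metis exp_gt_zero exp_le_cancel_iff exp_ln less_le_trans)
qed

lemma params2: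
  fixes N P d m T :: nat and C C0 \<alpha> sn s0 \<eta> \<epsilon> \<Gamma> \<delta> pun :: real and SU :: "nat set"
  assumes C: "10^12 \<le> C" and C0: "1 \<le> C0"
    and pos: "0 < \<alpha>" "0 < sn" "0 < s0" "0 < \<eta>" "0 < \<epsilon>" "0 < \<delta>" "\<delta> < 1"
    and std: "std_conditions C N P d m \<alpha> sn s0 \<eta> \<epsilon> \<Gamma> \<delta> T (real (card SU) / real N)"
    and N1: "1 \<le> N" and SUN: "card SU \<le> N"
    and d2: "2 \<le> d" and m1: "1 \<le> m" and TC: "C \<le> real T"
    and La1: "1 \<le> ln (real T * real N * real m * real P / \<delta>)"
    and Lb1: "1 \<le> ln (real T * real d * real N * real m * real P / \<delta>)"
  shows "2 * real (card SU) \<le> real N"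
proof -
  define La where "La = ln (real T * real N * real m * real P / \<delta>)"
  define Lb where "Lb = ln (real T * real d * real N * real m * real P / \<delta>)"
  note S = std[unfolded std_conditions_def of_nat_mult, folded La_def Lb_def]
  have La1': "1 \<le> La" using La1 by (simp add: La_def)
  have Lb1': "1 \<le> Lb" using Lb1 by (simp add: Lb_def)
  have P2: "2 \<le> P" and PC: "real P \<le> C" using S by auto
  have C0p: "0 < C" using C by simp
  have Cb: "1000000000000 \<le> C" using C by simp
  have N0: "0 < real N" using N1 by simp
  have mP1: "1 \<le> real m * real P" using m1 P2
    by (metis (mono_tags) le_trans mult_le_mono mult_1 one_le_numeral of_nat_1 of_nat_le_iff of_nat_mult)
  have NLb: "C * Lb \<le> real N"
  proof -
    have "C * Lb * 1 \<le> C * Lb * (real m * real P)" using mP1 C0p Lb1' by (intro mult_left_mono) auto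
    moreover have "C * real m * real P * Lb \<le> real N" using S by blast
    ultimately show ?thesis by (simp add: algebra_simps)
  qed
  have lndLb: "ln (real d) \<le> Lb"
  proof -
    have "1 \<le> real T" using TC Cb by linarith
    moreover have "1 * 1 \<le> real N * (real m * real P)" using N1 mP1 by (intro mult_mono) auto
    ultimately have "1 * 1 \<le> real T * (real N * (real m * real P))" by (intro mult_mono) auto
    hence "1 \<le> real T * real N * real m * real P" by (simp add: mult.assoc)
    hence "1 \<le> real T * real N * real m * real P / \<delta>" using pos div_delta[of "real T * real N * real m * real P" \<delta>] by linarith
    hence "real d * 1 \<le> real d * (real T * real N * real m * real P / \<delta>)" by (intro mult_left_mono) auto
    hence "real d \<le> real T * real d * real N * real m * real P / \<delta>" by (simp add: algebra_simps)
    thus ?thesis unfolding Lb_def using d2 by simp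
  qed
  show "2 * real (card SU) \<le> real N"
  proof (cases "card SU = 0")
    case True thus ?thesis by simp
  next
    case False
    hence "real (card SU) / real N \<noteq> 0" using N0 by simp
    hence "real (card SU) / real N \<le> 1 / C * ln (real d) / real N" using S by blast
    hence "real (card SU) \<le> ln (real d) / C" using N0 C0p by (simp add: field_simps)
    also have "\<dots> \<le> Lb / C" using lndLb C0p by (simp add: divide_right_mono)
    also have "\<dots> \<le> real N / (C * C)" using NLb C0p by (simp add: field_simps)
    also have "\<dots> \<le> real N / 2"
    proof -
      have "2 * 1 \<le> C * C" using Cb by (intro mult_mono) auto
      thus ?thesis using N0 by (intro divide_left_mono) auto
    qed
    finally show ?thesis by simp
  qed
qed

lemma mm_facts: "1 \<le> m \<Longrightarrow> (real m powr (1/3))^3 = real m \<and> (real m powr (1/3))^2 = real m powr (2/3)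
   \<and> (real m powr (1/3))^6 = real m ^ 2"
proof -
  assume m: "1 \<le> m"
  have m0: "real m \<noteq> 0" using m by simp
  have a: "(real m powr (1/3))^3 = real m" using powr_power[OF m0, of "1/3" 3] m0 by simp
  have b: "(real m powr (1/3))^2 = real m powr (2/3)" using powr_power[OF m0, of "1/3" 2] by simp
  have "(real m powr (1/3))^6 = ((real m powr (1/3))^3)^2" by (simp flip: power_mult)
  thus ?thesis using a b by simp
qed

lemma ge1mult: "1 \<le> (x::real) \<Longrightarrow> 1 \<le> y \<Longrightarrow> 1 \<le> x * y"
  using mult_mono[of 1 x 1 y] by simp

lemma params3:
  fixes N P d m T :: nat and C C0 \<alpha> sn s0 \<eta> \<epsilon> \<Gamma> \<delta> pun :: real
  assumes C: "10^12 \<le> C" and C0: "1 \<le> C0"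
    and pos: "0 < \<alpha>" "0 < sn" "0 < s0" "0 < \<eta>" "0 < \<epsilon>" "0 < \<delta>" "\<delta> < 1"
    and std: "std_conditions C N P d m \<alpha> sn s0 \<eta> \<epsilon> \<Gamma> \<delta> T pun"
    and N1: "1 \<le> N"
    and d2: "2 \<le> d" and m1: "1 \<le> m" and TC: "C \<le> real T"
    and Lb1: "1 \<le> ln (real T * real d * real N * real m * real P / \<delta>)"
  shows "real m * (s0 * sqrt (2 * ln (16 * real m / \<delta>)))^3 \<le> (C0 / (\<alpha> * real m powr (1/3)))^3 / 2"
proof -
  define Lb where "Lb = ln (real T * real d * real N * real m * real P / \<delta>)"
  note S = std[unfolded std_conditions_def of_nat_mult, folded Lb_def]
  have Lb1': "1 \<le> Lb" using Lb1 by (simp add: Lb_def)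
  have P2: "2 \<le> P" using S by auto
  have C0p: "0 < C" using C by simp
  have Cb: "1000000000000 \<le> C" using C by simp
  define mm where "mm = real m powr (1/3)"
  have mm0: "0 < mm" using m1 by (simp add: mm_def)
  have mmf: "mm^3 = real m" "mm^2 = real m powr (2/3)" "mm^6 = real m ^ 2" using mm_facts[OF m1] by (auto simp: mm_def)
  have Ss0: "s0 \<le> (1/C) * min (1 / (real m powr (2/3) * real P powr (2/3) * sn * sqrt (real d)))
                 (min (1 / (\<alpha> * real m powr (2/3))) (1 / (sn * real m^2 * sqrt (real P) * real d))) / Lb"
    using S by blast
  have Lb0: "0 < Lb" using Lb1' by simp
  have s02: "s0 \<le> (1/C) * (1 / (\<alpha> * mm^2)) / Lb"
    unfolding mmf by (rule cm[OF C0p Lb0 Ss0], simp)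
  define X where "X = 2 * ln (16 * real m / \<delta>)"
  have x16: "16 \<le> 16 * real m / \<delta>"
  proof -
    have "16 \<le> 16 * real m" using m1 by simp
    also have "\<dots> \<le> 16 * real m / \<delta>" using pos by (intro div_delta) auto
    finally show ?thesis .
  qed
  have X1: "1 \<le> X" using ln_ge1[of "16 * real m / \<delta>"] x16 unfolding X_def by linarith
  have XLb: "X \<le> 2 * Lb"
  proof -
    have "16 \<le> real T * real d * real N * real P"
    proof -
      have "1 \<le> real N * real P" using N1 P2 by (intro ge1mult) auto
      hence "1 * 1 \<le> real d * (real N * real P)" using d2 by (intro mult_mono) auto
      hence "16 * 1 \<le> real T * (real d * (real N * real P))" using TC Cb by (intro mult_mono) auto
      thus ?thesis by (simp add: mult.assoc)
    qed
    hence "16 * real m \<le> real T * real d * real N * real P * real m" using m1 by (intro mult_right_mono) auto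
    hence "16 * real m / \<delta> \<le> real T * real d * real N * real m * real P / \<delta>"
      using pos by (intro divide_right_mono) (auto simp: algebra_simps)
    moreover have "0 < 16 * real m / \<delta>" using x16 by linarith
    ultimately have "ln (16 * real m / \<delta>) \<le> Lb" unfolding Lb_def by (simp del: ln_le_cancel_iff add: ln_le_cancel_iff)
    thus ?thesis unfolding X_def by simp
  qed
  define io where "io = s0 * sqrt X"
  have io0: "0 \<le> io" using pos X1 by (simp add: io_def)
  have iob: "io \<le> 2 / (C * \<alpha> * mm^2)"
  proof -
    have "io \<le> s0 * (2 * Lb)" unfolding io_def using sqrt_le_self[OF X1] XLb pos by (intro mult_left_mono) auto
    also have "\<dots> \<le> (1/C) * (1 / (\<alpha> * mm^2)) / Lb * (2 * Lb)" using s02 Lb0 by (intro mult_right_mono) auto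
    also have "\<dots> = 2 / (C * \<alpha> * mm^2)" using Lb0 C0p pos mm0 by (simp add: field_simps)
    finally show ?thesis .
  qed
  have "real m * io^3 \<le> mm^3 * (2 / (C * \<alpha> * mm^2))^3"
    unfolding mmf(1)[symmetric] using iob io0 mm0 by (intro mult_left_mono power_mono) auto
  also have "\<dots> = (8 / C^3) * (1 / (\<alpha>^3 * mm^3))"
    using mm0 C0p pos by (simp add: field_simps power_mult_distrib eval_nat_numeral)
  also have "\<dots> \<le> (C0^3 / 2) * (1 / (\<alpha>^3 * mm^3))"
  proof (intro mult_right_mono)
    have "1 \<le> C * C" using Cb by (intro ge1mult) auto
    hence "C * 1 \<le> C * (C * C)" using C0p by (intro mult_left_mono) auto
    hence h: "C \<le> C * C * C" by (simp add: mult.assoc)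
    have "2 * 8 \<le> C^3 * 1" unfolding power3_eq_cube using h Cb by linarith
    also have "\<dots> \<le> C^3 * C0^3" using C0 C0p by (intro mult_left_mono) (auto simp: one_le_power)
    finally show "8 / C^3 \<le> C0^3 / 2" using C0p by (simp add: field_simps)
  qed (use mm0 pos in auto)
  also have "\<dots> = (C0 / (\<alpha> * mm))^3 / 2" by (simp add: field_simps power_mult_distrib)
  finally show ?thesis unfolding io_def X_def mm_def .
qed

lemma powr13_le: "0 \<le> (x::real) \<Longrightarrow> x \<le> L \<Longrightarrow> 1 \<le> L \<Longrightarrow> x powr (1/3) \<le> L"
proof -
  assume x: "0 \<le> x" and xL: "x \<le> L" and L: "1 \<le> L"
  show ?thesis
  proof (cases "x \<le> 1")
    case True thus ?thesis using powr_le1[of "1/3" x] x L by auto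
  next
    case False
    hence "x powr (1/3) \<le> x powr 1" by (intro powr_mono) auto
    thus ?thesis using False xL by simp
  qed
qed

lemma params4:
  fixes N P d m T :: nat and C C0 \<alpha> sn s0 \<eta> \<epsilon> \<Gamma> \<delta> :: real and SU :: "nat set"
  assumes C: "10^12 \<le> C"
    and pos: "0 < \<alpha>" "0 < sn" "0 < s0" "0 < \<eta>" "0 < \<epsilon>" "0 < \<delta>" "\<delta> < 1"
    and std: "std_conditions C N P d m \<alpha> sn s0 \<eta> \<epsilon> \<Gamma> \<delta> T (real (card SU) / real N)"
    and N1: "1 \<le> N" and SUN: "card SU \<le> N"
    and d2: "2 \<le> d" and m1: "1 \<le> m" and TC: "C \<le> real T"
    and La1: "1 \<le> ln (real T * real N * real m * real P / \<delta>)"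
    and Lb1: "1 \<le> ln (real T * real d * real N * real m * real P / \<delta>)"
  shows "real m * real P * (3 * s0 * sn * sqrt (real d * ln (real (16 * N * m * P) / \<delta>)) +
    21 * (real (card SU) / real N) * real N * real P * ln (real T) powr (1 / 3) / sqrt (real d) *
    sqrt (ln (real (16 * N^2 * P^2) / \<delta>)))^3 \<le> 1"
proof -
  define La where "La = ln (real T * real N * real m * real P / \<delta>)"
  define Lb where "Lb = ln (real T * real d * real N * real m * real P / \<delta>)"
  note S = std[unfolded std_conditions_def of_nat_mult, folded La_def Lb_def]
  have La1': "1 \<le> La" using La1 by (simp add: La_def)
  have Lb1': "1 \<le> Lb" using Lb1 by (simp add: Lb_def)
  have P2: "2 \<le> P" and PC: "real P \<le> C" using S by auto
  have C0p: "0 < C" using C by simp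
  have Cb: "1000000000000 \<le> C" using C by simp
  have Lb0: "0 < Lb" using Lb1' by simp
  have dpos: "0 < real d" using d2 by simp
  have T1: "1 \<le> real T" using TC Cb by linarith
  define mm where "mm = real m powr (1/3)"
  define pp where "pp = real P powr (1/3)"
  have mm0: "0 < mm" using m1 by (simp add: mm_def)
  have pp0: "0 < pp" using P2 by (simp add: pp_def)
  have mmf: "mm^3 = real m" "mm^2 = real m powr (2/3)" "mm^6 = real m ^ 2" using mm_facts[OF m1] by (auto simp: mm_def)
  have ppf: "pp^3 = real P" "pp^2 = real P powr (2/3)" "pp^6 = real P ^ 2" using mm_facts[of P] P2 by (auto simp: pp_def)
  have mP1: "1 \<le> real m * real P" using m1 P2 by (intro ge1mult) auto
  define T1 where "T1 = 3 * s0 * sn * sqrt (real d * ln (real (16 * N * m * P) / \<delta>))"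
  define L1 where "L1 = ln (real (16 * N * m * P) / \<delta>)"
  have Ss0: "s0 \<le> (1/C) * min (1 / (real m powr (2/3) * real P powr (2/3) * sn * sqrt (real d)))
                 (min (1 / (\<alpha> * real m powr (2/3))) (1 / (sn * real m^2 * sqrt (real P) * real d))) / Lb"
    using S by blast
  have s01: "s0 \<le> (1/C) * (1 / (mm^2 * pp^2 * sn * sqrt (real d))) / Lb"
    unfolding mmf ppf by (rule cm[OF C0p Lb0 Ss0], simp)
  have y16: "16 \<le> real (16 * N * m * P)"
  proof -
    have "1 \<le> real N * (real m * real P)" using N1 mP1 by (rule_tac ge1mult) auto
    hence "16 * 1 \<le> 16 * (real N * (real m * real P))" by (intro mult_left_mono) auto
    thus ?thesis by (simp only: of_nat_mult of_nat_numeral mult.assoc mult_1_right)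
  qed
  have L11: "1 \<le> L1"
  proof -
    have "16 \<le> real (16 * N * m * P) / \<delta>" using y16 div_delta[of "real (16 * N * m * P)" \<delta>] pos by linarith
    thus ?thesis unfolding L1_def by (intro ln_ge1) linarith
  qed
  have L1Lb: "L1 \<le> Lb"
  proof -
    have "16 * 1 \<le> real T * real d" using T1 Cb TC d2 by (intro mult_mono) auto
    hence "16 * (real N * real m * real P) \<le> real T * real d * (real N * real m * real P)"
      by (intro mult_right_mono) auto
    hence "real (16 * N * m * P) / \<delta> \<le> real T * real d * real N * real m * real P / \<delta>"
      using pos by (intro divide_right_mono) (auto simp: algebra_simps)
    moreover have "0 < real (16 * N * m * P) / \<delta>" using y16 pos by (intro divide_pos_pos) linarith+
    ultimately show ?thesis unfolding L1_def Lb_def by simp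
  qed
  have T10: "0 \<le> T1" using pos L11 by (simp add: T1_def L1_def)
  have T1b: "T1 \<le> 3 / (C * mm^2 * pp^2)"
  proof -
    have "T1 = 3 * (s0 * (sn * sqrt (real d))) * sqrt L1" by (simp add: T1_def L1_def real_sqrt_mult)
    also have "\<dots> \<le> 3 * ((1/C) * (1 / (mm^2 * pp^2 * sn * sqrt (real d))) / Lb * (sn * sqrt (real d))) * Lb"
    proof (intro mult_mono mult_left_mono mult_right_mono)
      show "sqrt L1 \<le> Lb" using sqrt_le_self[OF L11] L1Lb by linarith
    qed (use s01 pos dpos L11 Lb0 C0p mm0 pp0 in auto)
    also have "\<dots> = 3 / (C * mm^2 * pp^2)" using pos dpos Lb0 C0p mm0 pp0 by (simp add: field_simps)
    finally show ?thesis .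
  qed
  have T1c: "real m * real P * T1^3 \<le> 27 / C^3"
  proof -
    have "real m * real P * T1^3 \<le> real m * real P * (3 / (C * mm^2 * pp^2))^3"
      using T1b T10 mP1 by (intro mult_left_mono power_mono) auto
    also have "\<dots> = 27 / (C^3 * (real m * real P))"
      unfolding mmf(1)[symmetric] ppf(1)[symmetric] using mm0 pp0 C0p
      by (simp add: field_simps power_mult_distrib eval_nat_numeral)
    also have "\<dots> \<le> 27 / C^3" using mP1 C0p by (simp add: field_simps)
    finally show ?thesis .
  qed
  define T2 where "T2 = 21 * (real (card SU) / real N) * real N * real P * ln (real T) powr (1 / 3) / sqrt (real d) *
    sqrt (ln (real (16 * N^2 * P^2) / \<delta>))"
  define L2 where "L2 = ln (real (16 * N^2 * P^2) / \<delta>)"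
  define K where "K = sqrt C"
  have K0: "1000000 \<le> K"
  proof -
    have "sqrt 1000000000000 \<le> sqrt C" using Cb by (intro real_sqrt_le_mono)
    moreover have "sqrt (1000000000000::real) = 1000000" by (simp add: real_sqrt_eq_iff[symmetric] power2_eq_square)
    ultimately show ?thesis unfolding K_def by simp
  qed
  have KK: "K * K = C" using C0p by (simp add: K_def)
  have N0: "0 < real N" using N1 by simp
  have cSU: "real (card SU) / real N * real N \<le> real N" using SUN N0 by simp
  have cSU0: "0 \<le> real (card SU) / real N * real N" by simp
  have La0: "0 < La" using La1' by simp
  have LtLa: "ln (real T) powr (1/3) \<le> La"
  proof -
    have "real T \<le> real T * real N * real m * real P / \<delta>"
    proof -
      have "real T * 1 \<le> real T * (real N * (real m * real P))" using T1 N1 mP1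
        by (intro mult_left_mono) (rule_tac ge1mult, auto)
      also have "\<dots> \<le> real T * real N * real m * real P / \<delta>"
        using pos div_delta[of "real T * (real N * (real m * real P))" \<delta>] T1 by (simp add: mult.assoc)
      finally show ?thesis by simp
    qed
    hence "ln (real T) \<le> La" unfolding La_def using T1 by simp
    thus ?thesis using T1 La1' by (intro powr13_le) auto
  qed
  have y2: "16 \<le> real (16 * N^2 * P^2)"
  proof -
    have "1 \<le> real N ^ 2 * real P ^ 2" using N1 P2 by (rule_tac ge1mult) (auto simp: one_le_power)
    hence "16 * 1 \<le> 16 * (real N ^ 2 * real P ^ 2)" by (intro mult_left_mono) auto
    thus ?thesis by (simp add: mult.assoc)
  qed
  have L21: "1 \<le> L2"
  proof -
    have "16 \<le> real (16 * N^2 * P^2) / \<delta>" using y2 div_delta[of "real (16 * N^2 * P^2)" \<delta>] pos by linarith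
    thus ?thesis unfolding L2_def by (intro ln_ge1) linarith
  qed
  have L2La: "L2 \<le> 2 * La"
  proof -
    define z where "z = real T * real N * real m * real P / \<delta>"
    have z0: "0 < z" using T1 N1 m1 P2 pos by (simp add: z_def)
    have "real (16 * N^2 * P^2) / \<delta> \<le> real (16 * N^2 * P^2) / \<delta>^2"
    proof -
      have "\<delta>^2 \<le> \<delta>" using pos by (simp add: power2_eq_square mult_left_le)
      thus ?thesis using pos y2 by (intro divide_left_mono) auto
    qed
    also have "\<dots> \<le> z^2"
    proof -
      have "16 \<le> real T ^ 2 * real m ^ 2"
      proof -
        have "(4::real)^2 \<le> real T ^ 2" using TC Cb by (intro power_mono) auto
        moreover have "1 \<le> real m ^ 2" using m1 by (simp add: one_le_power)
        ultimately have "16 * 1 \<le> real T ^ 2 * real m ^ 2" by (intro mult_mono) auto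
        thus ?thesis by simp
      qed
      hence "16 * (real N^2 * real P^2) \<le> real T ^ 2 * real m ^ 2 * (real N^2 * real P^2)"
        by (intro mult_right_mono) auto
      thus ?thesis using pos by (simp add: z_def power_divide power_mult_distrib divide_right_mono algebra_simps)
    qed
    finally have "L2 \<le> ln (z^2)" unfolding L2_def using y2 pos z0 by simp
    also have "\<dots> = 2 * La" using z0 by (simp add: ln_realpow La_def z_def)
    finally show ?thesis .
  qed
  have sqd: "K * (real m * real P * real N * La^2) \<le> sqrt (real d)"
  proof -
    have "C * real m ^ 2 * real P ^ 2 * real N ^ 2 * La ^ 4 \<le> real d" using S by blast
    moreover have "(K * (real m * real P * real N * La^2))^2 = C * real m ^ 2 * real P ^ 2 * real N ^ 2 * La ^ 4"
    proof -
      have "(K * (real m * real P * real N * La^2))^2 = (K * K) * (real m ^ 2 * real P ^ 2 * real N ^ 2 * (La^2)^2)"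
        by (simp add: power_mult_distrib power2_eq_square)
      also have "(La^2)^2 = La^4" by (simp flip: power_mult)
      finally show ?thesis using KK by (simp add: algebra_simps)
    qed
    ultimately have "(K * (real m * real P * real N * La^2))^2 \<le> real d" by simp
    thus ?thesis using K0 by (intro real_le_rsqrt) auto
  qed
  have T2eq: "T2 = 21 * (real (card SU) / real N * real N) * real P * ln (real T) powr (1 / 3) * sqrt L2 / sqrt (real d)"
    by (simp add: T2_def L2_def)
  have T20: "0 \<le> T2" unfolding T2eq using L21 by (intro divide_nonneg_nonneg mult_nonneg_nonneg) auto
  have T2b: "T2 \<le> 42 / (K * real m)"
  proof -
    have "T2 = 21 * (real (card SU) / real N * real N) * real P * ln (real T) powr (1 / 3) * sqrt L2 / sqrt (real d)"
      by (rule T2eq)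
    also have "\<dots> \<le> 21 * real N * real P * La * (2 * La) / (K * (real m * real P * real N * La^2))"
    proof (intro frac_le mult_mono mult_left_mono mult_right_mono)
      show "sqrt L2 \<le> 2 * La" using sqrt_le_self[OF L21] L2La by linarith
    qed (use cSU cSU0 LtLa sqd K0 m1 P2 N1 La1' L21 T1 in auto)
    also have "\<dots> = 42 / (K * real m)" using K0 m1 P2 N1 La0 by (simp add: field_simps power2_eq_square)
    finally show ?thesis .
  qed
  have T2c: "real m * real P * T2^3 \<le> 74088 / K"
  proof -
    have "real m * real P * T2^3 \<le> real m * real P * (42 / (K * real m))^3"
      using T2b T20 mP1 by (intro mult_left_mono power_mono) auto
    also have "\<dots> = 74088 * real P / (K^3 * real m^2)" using K0 m1 by (simp add: field_simps power_mult_distrib eval_nat_numeral)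
    also have "\<dots> \<le> 74088 * (K * K) / (K^3 * 1)"
      using PC KK K0 m1 by (intro frac_le mult_left_mono) (auto simp: one_le_power)
    also have "\<dots> = 74088 / K" using K0 by (simp add: power3_eq_cube)
    finally show ?thesis .
  qed
  have "real m * real P * (T1 + T2)^3 \<le> real m * real P * (4 * (T1^3 + T2^3))"
    using cube_sum[OF T10 T20] mP1 by (intro mult_left_mono) auto
  also have "\<dots> = 4 * (real m * real P * T1^3 + real m * real P * T2^3)" by (simp add: algebra_simps)
  also have "\<dots> \<le> 4 * (27 / C^3 + 74088 / K)" using T1c T2c by simp
  also have "\<dots> \<le> 1"
  proof -
    have "1 \<le> C * C" using Cb by (rule_tac ge1mult) auto
    hence "C * 1 \<le> C * (C * C)" using C0p by (intro mult_left_mono) auto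
    hence h: "C \<le> C * C * C" by (simp add: mult.assoc)
    have "1000000000000 \<le> C^3" unfolding power3_eq_cube using h Cb by linarith
    hence a1: "27 / C^3 \<le> 27 / 1000000000000" using C0p by (intro divide_left_mono) auto
    have a2: "74088 / K \<le> 74088 / 1000000" using K0 by (intro divide_left_mono) auto
    show ?thesis using a1 a2 by argo
  qed
  finally show ?thesis unfolding T1_def T2_def .
qed

lemma inner_unit1: "1 \<le> d \<Longrightarrow> inner_d d w (unit_vec 1) = w 1"
  unfolding inner_d_def unit_vec_def by (simp add: if_distrib cong: if_cong)

theorem lemmaF7:
  "\<exists>C0bar. \<forall>C0 \<ge> C0bar. \<exists>C1. \<forall>C \<ge> C1.
   \<forall>(N::nat) (P::nat) (d::nat) (m::nat) (\<alpha>::real) (sn::real) (s0::real) (\<eta>::real) (\<epsilon>::real)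
    (\<Gamma>::real) (\<delta>::real) (T::nat) (SL::nat set) (SU::nat set)
    (y::nat \<Rightarrow> real) (s::nat \<Rightarrow> nat) (x::nat \<Rightarrow> nat \<Rightarrow> nat \<Rightarrow> real)
    (W::nat \<Rightarrow> nat \<Rightarrow> nat \<Rightarrow> real) (Xt::nat \<Rightarrow> nat \<Rightarrow> nat \<Rightarrow> nat \<Rightarrow> real)
    (T0::nat) (t::nat).
     0 < C \<longrightarrow> 0 < C0 \<longrightarrow>
     0 < \<alpha> \<longrightarrow> 0 < sn \<longrightarrow> 0 < s0 \<longrightarrow> 0 < \<eta> \<longrightarrow> 0 < \<epsilon> \<longrightarrow> 0 < \<Gamma> \<longrightarrow>
     0 < \<delta> \<longrightarrow> \<delta> < 1 \<longrightarrow>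
     SL \<union> SU = {1..N} \<longrightarrow> SL \<inter> SU = {} \<longrightarrow>
     std_conditions C N P d m \<alpha> sn s0 \<eta> \<epsilon> \<Gamma> \<delta> T (real (card SU) / real N) \<longrightarrow>
     (\<forall>i\<in>{1..N}. y i \<in> {-1, 1} \<and> s i \<in> {1..P}
        \<and> x i (s i) = (\<lambda>j. \<alpha> * y i * (if i \<in> SL then unit_vec 1 j else unit_vec d j))
        \<and> (\<forall>p\<in>{1..P}. p \<noteq> s i \<longrightarrow> x i p 1 = 0 \<and> x i p d = 0)) \<longrightarrow>
     (\<forall>r\<in>{1..m}. W 0 r d = 0) \<longrightarrow>
     event_E N P d m sn s0 \<delta> y s x (W 0) \<longrightarrow>
     (\<forall>\<tau> i. i \<in> {1..N} \<longrightarrow> Xt \<tau> i \<in> adm_set d \<epsilon> (s i) (x i)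
        \<and> (\<forall>X' \<in> adm_set d \<epsilon> (s i) (x i).
              logloss (y i * fnet m P d (W \<tau>) X') \<le> logloss (y i * fnet m P d (W \<tau>) (Xt \<tau> i)))) \<longrightarrow>
     (\<forall>\<tau>. \<forall>r\<in>{1..m}. \<forall>j\<in>{1..d}.
        W (Suc \<tau>) r j = (if j = d then 0 else
           W \<tau> r j - \<eta> / N * (\<Sum>i=1..N. grad_entry m P d (W \<tau>) (y i) (Xt \<tau> i) r j))) \<longrightarrow>
     Max ((\<lambda>r. W T0 r 1) ` {1..m}) > C0 / (\<alpha> * m powr (1/3)) \<longrightarrow>
     (\<forall>\<tau> < T0. \<not> (Max ((\<lambda>r. W \<tau> r 1) ` {1..m}) > C0 / (\<alpha> * m powr (1/3)))) \<longrightarrow>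
     T0 + 1 \<le> t \<longrightarrow> t \<le> T \<longrightarrow>
     (\<forall>\<tau> \<le> t. \<forall>r\<in>{1..m}. \<forall>i\<in>SL. \<forall>j\<in>{1..P}. j \<noteq> s i \<longrightarrow>
        \<bar>inner_d d (W \<tau> r) (x i j)\<bar> \<le> 3 * s0 * sn * sqrt (d * ln (16 * N * m * P / \<delta>))
          + 21 * (real (card SU) / N) * N * P * (ln T) powr (1/3) / sqrt d * sqrt (ln (16 * N^2 * P^2 / \<delta>))) \<longrightarrow>
     (\<forall>i\<in>SL.
        (\<Sum>\<tau>=T0..<t. psi (y i * fnet m P d (W \<tau>) (Xt \<tau> i)))
          \<le> 2 * m powr (2/3) * (ln T) powr (1/3) / (C0^2 * (1 - \<epsilon>/\<alpha>)^3 * \<eta> * \<alpha>^2)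
      \<and> psi (y i * fnet m P d (W t) (Xt t i))
          \<le> 4 * m powr (2/3) * (ln T) powr (1/3) / (C0^2 * (1 - \<epsilon>/\<alpha>)^3 * \<eta> * \<alpha>^2 * (t - T0)))"
  apply (rule exI[of _ 1])
  apply (intro allI impI)
  apply (rule_tac x = "max (10^12) (exp (27000 * C0^3))" in exI)
  apply (intro allI impI ballI)
  subgoal premises p for C0 C N P d m \<alpha> sn s0 \<eta> \<epsilon> \<Gamma> \<delta> T SL SU y s x W Xt T0 t i
  proof -
    have C0: "1 \<le> C0" using p(1) by simp
    have Cb: "10^12 \<le> C" "exp (27000 * C0^3) \<le> C" using p(2) by auto
    have pos: "0 < \<alpha>" "0 < sn" "0 < s0" "0 < \<eta>" "0 < \<epsilon>" "0 < \<delta>" "\<delta> < 1"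
      using p(5,6,7,8,9,11,12) by auto
    note part1 = p(13) and part2 = p(14) and std = p(15) and data = p(16) and ev = p(18)
      and adv = p(19) and upd = p(20) and T0max = p(21) and tt = p(23) and tT = p(24)
      and nH = p(25) and iSL = p(26)
    have SLN: "SL \<subseteq> {1..N}" and SUN: "SU \<subseteq> {1..N}" using part1 by auto
    have N1: "1 \<le> N" using iSL SLN by auto
    have T1: "1 \<le> T" using tt tT by simp
    note P1 = params1[OF Cb C0 pos std N1 T1]
    have d2: "2 \<le> d" and m1: "1 \<le> m" and e2: "\<epsilon> / \<alpha> \<le> 1/2" and etab: "\<eta> * \<alpha>^2 \<le> 1/486"
      and lnT: "30 * C0 \<le> (ln (real T)) powr (1/3)" and TC: "C \<le> real T"
      and La1: "1 \<le> ln (real T * real N * real m * real P / \<delta>)"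
      and Lb1: "1 \<le> ln (real T * real d * real N * real m * real P / \<delta>)"
      using P1 by auto
    have cSU: "card SU \<le> N" using card_mono[OF _ SUN] by simp
    have SUh: "2 * real (card SU) \<le> real N" by (rule params2[OF Cb(1) C0 pos std N1 cSU d2 m1 TC La1 Lb1])
    have finL: "finite SL" using finite_subset[OF SLN] by simp
    have finU: "finite SU" using finite_subset[OF SUN] by simp
    have "card (SL \<union> SU) = card SL + card SU" by (rule card_Un_disjoint[OF finL finU part2])
    hence cardN: "card SL + card SU = N" unfolding part1 by simp
    have SLc: "real N \<le> 2 * real (card SL)"
    proof -
      have "real (card SL) + real (card SU) = real N" unfolding cardN[symmetric] by simp
      thus ?thesis using SUh by linarith
    qed
    define io where "io = s0 * sqrt (2 * ln (16 * real m / \<delta>))"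
    have iota: "real m * io^3 \<le> (C0 / (\<alpha> * real m powr (1/3)))^3 / 2"
      unfolding io_def by (rule params3[OF Cb(1) C0 pos std N1 d2 m1 TC Lb1])
    have io0: "0 \<le> io"
    proof -
      have "1 \<le> 16 * real m / \<delta>" using m1 pos div_delta[of "16 * real m" \<delta>] by simp
      thus ?thesis unfolding io_def using pos by simp
    qed
    have init: "\<forall>r\<in>{1..m}. - io \<le> W 0 r 1"
    proof
      fix r assume r: "r \<in> {1..m}"
      note ev3 = ev[unfolded event_E_def, THEN conjunct2, THEN conjunct2, THEN conjunct1]
      have "\<bar>inner_d d (W 0 r) (unit_vec 1)\<bar> \<le> io" using ev3 r unfolding io_def by auto
      thus "- io \<le> W 0 r 1" using inner_unit1[of d "W 0 r"] d2 by simp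
    qed
    define B where "B = 3 * s0 * sn * sqrt (real d * ln (real (16 * N * m * P) / \<delta>)) +
      21 * (real (card SU) / real N) * real N * real P * ln (real T) powr (1 / 3) / sqrt (real d) *
      sqrt (ln (real (16 * N^2 * P^2) / \<delta>))"
    have mPB: "real m * real P * B^3 \<le> 1" unfolding B_def by (rule params4[OF Cb(1) pos std N1 cSU d2 m1 TC La1 Lb1])
    have P2: "2 \<le> P" using std unfolding std_conditions_def by auto
    have noise: "\<forall>\<tau>\<le>t. \<forall>k\<in>SL. \<bar>y k * (\<Sum>r=1..m. \<Sum>p\<in>{1..P}-{s k}. (inner_d d (W \<tau> r) (x k p))^3)\<bar> \<le> 1"
    proof (intro allI impI ballI)
      fix \<tau> k assume \<tau>: "\<tau> \<le> t" and k: "k \<in> SL"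
      have kN: "k \<in> {1..N}" using k SLN by auto
      have "y k \<in> {-1, 1}" using data kN by blast
      hence yk: "\<bar>y k\<bar> = 1" by auto
      have bnd: "\<bar>inner_d d (W \<tau> r) (x k p)\<bar> \<le> B" if "r \<in> {1..m}" "p \<in> {1..P}" "p \<noteq> s k" for r p
        unfolding B_def by (rule nH[rule_format, OF \<tau> that(1) k that(2) that(3)])
      have B0: "0 \<le> B"
      proof -
        define p where "p = (if s k = 1 then 2 else (1::nat))"
        have pp: "p \<in> {1..P}" "p \<noteq> s k" using P2 by (auto simp: p_def)
        have "\<bar>inner_d d (W \<tau> 1) (x k p)\<bar> \<le> B" using bnd[OF _ pp] m1 by simp
        thus ?thesis by linarith
      qed
      have "\<bar>\<Sum>r=1..m. \<Sum>p\<in>{1..P}-{s k}. (inner_d d (W \<tau> r) (x k p))^3\<bar>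
          \<le> (\<Sum>r=1..m. \<Sum>p\<in>{1..P}-{s k}. \<bar>inner_d d (W \<tau> r) (x k p)\<bar>^3)"
        by (rule order_trans[OF sum_abs], rule sum_mono, rule order_trans[OF sum_abs]) (simp add: power_abs)
      also have "\<dots> \<le> (\<Sum>r=1..m. \<Sum>p\<in>{1..P}-{s k}. B^3)"
        using bnd by (intro sum_mono power_mono) auto
      also have "\<dots> = real m * (real (card ({1..P}-{s k})) * B^3)" by simp
      also have "\<dots> \<le> real m * (real P * B^3)"
      proof -
        have "card ({1..P}-{s k}) \<le> card {1..P}" by (rule card_mono) auto
        hence "card ({1..P}-{s k}) \<le> P" by simp
        thus ?thesis using B0 by (intro mult_left_mono mult_right_mono) auto
      qed
      also have "\<dots> \<le> 1" using mPB by (simp add: mult.assoc)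
      finally show "\<bar>y k * (\<Sum>r=1..m. \<Sum>p\<in>{1..P}-{s k}. (inner_d d (W \<tau> r) (x k p))^3)\<bar> \<le> 1"
        by (simp add: abs_mult yk)
    qed
    have tt': "T0 + 1 \<le> t" by (rule tt)
    note cr = core[OF p(4) pos(1) pos(4) pos(5) e2 d2 m1 part1 part2 SLc data adv upd init io0 iota T0max tt' noise etab lnT iSL]
    have tpos: "0 < real (t - T0)" using tt by simp
    have teq: "real (t - T0) = real t - real T0" using tt by (simp add: of_nat_diff)
    show ?thesis
    proof
      show "(\<Sum>\<tau>=T0..<t. psi (y i * fnet m P d (W \<tau>) (Xt \<tau> i)))
          \<le> 2 * real m powr (2/3) * ln (real T) powr (1/3) / (C0^2 * (1 - \<epsilon>/\<alpha>)^3 * \<eta> * \<alpha>^2)"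
        using cr by simp
      have "psi (y i * fnet m P d (W t) (Xt t i)) * real (t - T0)
          \<le> 4 * real m powr (2/3) * ln (real T) powr (1/3) / (C0^2 * (1 - \<epsilon>/\<alpha>)^3 * \<eta> * \<alpha>^2)"
        using cr teq by simp
      hence "psi (y i * fnet m P d (W t) (Xt t i))
          \<le> 4 * real m powr (2/3) * ln (real T) powr (1/3) / (C0^2 * (1 - \<epsilon>/\<alpha>)^3 * \<eta> * \<alpha>^2) / real (t - T0)"
        unfolding pos_le_divide_eq[OF tpos] .
      thus "psi (y i * fnet m P d (W t) (Xt t i))
          \<le> 4 * real m powr (2/3) * ln (real T) powr (1/3) / (C0^2 * (1 - \<epsilon>/\<alpha>)^3 * \<eta> * \<alpha>^2 * real (t - T0))"
        by (simp only: divide_divide_eq_left)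
    qed
  qed
  done

end
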